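(* Let $p$ be a prime and $q=1/p$. For integers $n\ge1$, $\mu\ge1$, let $P(n,p^\mu)$ be the probability that a random symmetric $n\times n$ matrix over $\mathbf{Z}_{p^\mu}$ has determinant $\not\equiv 0\pmod{p^\mu}$, and extend this by the boundary conditions $P(0,p^\mu)=1$ for $\mu>0$ and $P(n,p^\mu)=0$ for $\mu\le 0$ (all $n\ge 0$). Then for all $n>0$ and $\mu>0$, $$P(n,p^\mu)=(1-q)P(n-1,p^\mu)+q(1-q^{n-1})P(n-2,p^\mu)+q^n(1-q)P(n-1,p^{\mu-1})+q^{n+1}P(n,p^{\mu-2}),$$ where for $n=1$ the second term (whose coefficient $q(1-q^{0})$ vanishes) is taken to be $0$.
   Context: For a positive integer $m$, $\mathbf{Z}_m=\{1,2,\ldots,m\}$ (viewed as residues mod $m$). A random symmetric $n\times n$ matrix over $\mathbf{Z}_m$ is one whose entries $a_{ij}$, $i\le j$, are chosen independently and uniformly from $\mathbf{Z}_m$, with $a_{ji}=a_{ij}$. *)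

theory Defs
  imports Complex_Main "Jordan_Normal_Form.Determinant"
begin

text \<open>Symmetric n x n matrices with entries in Z_m = {1,...,m}, represented as
  functions on indices, with entries fixed to 0 outside the n x n range
  (so that the set is in bijection with the actual matrices).\<close>
definition sym_mats :: "nat \<Rightarrow> nat \<Rightarrow> (nat \<Rightarrow> nat \<Rightarrow> int) set" where
  "sym_mats n m = {A. (\<forall>i j. i < n \<and> j < n \<longrightarrow> A i j \<in> {1..int m} \<and> A i j = A j i)
                     \<and> (\<forall>i j. \<not> (i < n \<and> j < n) \<longrightarrow> A i j = 0)}"

definition to_mat :: "nat \<Rightarrow> (nat \<Rightarrow> nat \<Rightarrow> int) \<Rightarrow> int mat" where
  "to_mat n A = mat n n (\<lambda>(i, j). A i j)"

definition P_nonsing :: "nat \<Rightarrow> nat \<Rightarrow> real" where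
  "P_nonsing n m = real (card {A \<in> sym_mats n m. \<not> (int m dvd det (to_mat n A))})
                   / real (card (sym_mats n m))"

definition Pb :: "nat \<Rightarrow> nat \<Rightarrow> int \<Rightarrow> real" where
  "Pb p n \<mu> = (if \<mu> \<le> 0 then 0 else if n = 0 then 1 else P_nonsing n (p ^ nat \<mu>))"

end

theory Submission
  imports Defs "HOL-Number_Theory.Cong"
begin
lemma card_fiber_const:
  assumes "finite X" "finite Y" "f ` X \<subseteq> Y" "\<And>y. y \<in> Y \<Longrightarrow> card {x\<in>X. f x = y} = c"
  shows "card {x\<in>X. Q (f x)} = c * card {y\<in>Y. Q y}"
proof -
  have eq: "{x\<in>X. Q (f x)} = (\<Union>y\<in>{y\<in>Y. Q y}. {x\<in>X. f x = y})" using assms(3) by auto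
  have "card (\<Union>y\<in>{y\<in>Y. Q y}. {x\<in>X. f x = y}) = (\<Sum>y\<in>{y\<in>Y. Q y}. card {x\<in>X. f x = y})"
    by (rule card_UN_disjoint) (use assms in auto)
  also have "\<dots> = (\<Sum>y\<in>{y\<in>Y. Q y}. c)" using assms(4) by simp
  finally show ?thesis using eq by simp
qed

lemma card_bij_pred:
  assumes "bij_betw g S S"
  shows "card {x\<in>S. Q (g x)} = card {x\<in>S. Q x}"
proof -
  have "g ` {x\<in>S. Q (g x)} = {x\<in>S. Q x}" using assms
    by (auto simp: bij_betw_def)
  moreover have "inj_on g {x\<in>S. Q (g x)}" using assms
    by (auto simp: bij_betw_def intro: inj_on_subset)
  ultimately show ?thesis by (metis card_image)
qed

lemma card_split_const:
  assumes "finite X1" "finite Y0"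
    "\<And>y. y \<in> Y0 \<Longrightarrow> P y \<Longrightarrow> card {C\<in>X1. Q C y} = c"
  shows "card {x \<in> X1 \<times> Y0. P (snd x) \<and> Q (fst x) (snd x)} = c * card {y\<in>Y0. P y}"
proof -
  let ?X = "{x \<in> X1 \<times> Y0. P (snd x) \<and> Q (fst x) (snd x)}"
  have "card {x \<in> ?X. True} = c * card {y\<in>{y\<in>Y0. P y}. True}"
  proof (rule card_fiber_const[where f=snd])
    show "finite ?X" using assms(1,2) by (auto intro: finite_subset[of _ "X1 \<times> Y0"])
    show "finite {y\<in>Y0. P y}" using assms(2) by auto
    show "snd ` ?X \<subseteq> {y\<in>Y0. P y}" by auto
    fix y assume y: "y \<in> {y\<in>Y0. P y}"
    have "{x\<in>?X. snd x = y} = {C\<in>X1. Q C y} \<times> {y}" using y by auto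
    then show "card {x\<in>?X. snd x = y} = c" using assms(3) y by (simp add: card_cartesian_product)
  qed
  then show ?thesis by simp
qed

lemma card_mod_fiber:
  fixes M M' :: nat and y :: int
  assumes "0 < M'" "M' dvd M" "0 \<le> y" "y < int M'"
  shows "card {a \<in> {0..<int M}. a mod int M' = y} = M div M'"
proof -
  obtain c where M: "M = M' * c" using assms by blast
  have "{a \<in> {0..<int M}. a mod int M' = y} = (\<lambda>t. y + int M' * int t) ` {0..<c}"
  proof (intro equalityI subsetI)
    fix a assume a: "a \<in> {a \<in> {0..<int M}. a mod int M' = y}"
    then have a1: "0 \<le> a" "a < int M' * int c" "a mod int M' = y" using M by auto
    have d0: "0 \<le> a div int M'" using a1(1) assms(1) by (metis pos_imp_zdiv_nonneg_iff of_nat_0_less_iff)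
    have d1: "a div int M' < int c" using a1 assms(1)
      by (smt (verit, best) mult_div_mod_eq nonzero_mult_div_cancel_left
        of_nat_less_0_iff pos_mod_sign zdiv_mono1 zero_less_mult_iff)
    have "a = y + int M' * int (nat (a div int M'))" using a1 assms(1)
      using div_int_pos_iff by force
    moreover have "nat (a div int M') \<in> {0..<c}" using d0 d1 by auto
    ultimately show "a \<in> (\<lambda>t. y + int M' * int t) ` {0..<c}" by blast
  next
    fix a assume "a \<in> (\<lambda>t. y + int M' * int t) ` {0..<c}"
    then obtain t where t: "t < c" "a = y + int M' * int t" by auto
    have "a < int M' * (int t + 1)" using t assms by (simp add: algebra_simps)
    also have "\<dots> \<le> int M' * int c" using t by (intro mult_left_mono) auto
    finally have "a < int M" using M by simp
    moreover have "a mod int M' = y" using t assms by simp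
    moreover have "0 \<le> a" using t assms by simp
    ultimately show "a \<in> {a \<in> {0..<int M}. a mod int M' = y}" by auto
  qed
  moreover have "inj_on (\<lambda>t. y + int M' * int t) {0..<c}" using assms by (auto simp: inj_on_def)
  ultimately show ?thesis using M assms by (simp add: card_image)
qed

definition vecs :: "nat \<Rightarrow> nat \<Rightarrow> (nat \<Rightarrow> int) set" where
  "vecs k M = {v. (\<forall>i<k. v i \<in> {0..<int M}) \<and> (\<forall>i. k \<le> i \<longrightarrow> v i = 0)}"
definition modv :: "nat \<Rightarrow> (nat \<Rightarrow> int) \<Rightarrow> nat \<Rightarrow> int" where
  "modv M v = (\<lambda>i. v i mod int M)"

lemma vecs_0: "vecs 0 M = {\<lambda>_. 0}"
  unfolding vecs_def by (auto simp: fun_eq_iff)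

lemma vecs_Suc: "vecs (Suc k) M = (\<lambda>(u,x). u(k:=x)) ` (vecs k M \<times> {0..<int M})"
proof (intro equalityI subsetI)
  fix v assume v: "v \<in> vecs (Suc k) M"
  have "v = (\<lambda>(u,x). u(k:=x)) (v(k:=0), v k)" by auto
  moreover have "(v(k:=0), v k) \<in> vecs k M \<times> {0..<int M}" using v
    by (auto simp: vecs_def less_Suc_eq)
  ultimately show "v \<in> (\<lambda>(u,x). u(k:=x)) ` (vecs k M \<times> {0..<int M})" by blast
next
  fix v assume "v \<in> (\<lambda>(u,x). u(k:=x)) ` (vecs k M \<times> {0..<int M})"
  then obtain u x where ux: "v = u(k:=x)" "u \<in> vecs k M" "x \<in> {0..<int M}" by auto
  show "v \<in> vecs (Suc k) M" unfolding vecs_def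
  proof (intro CollectI conjI allI impI)
    fix i assume "i < Suc k" then show "v i \<in> {0..<int M}" using ux by (cases "i = k") (auto simp: vecs_def)
  next
    fix i assume "Suc k \<le> i" then show "v i = 0" using ux by (auto simp: vecs_def)
  qed
qed

lemma vecs_Suc_inj: "inj_on (\<lambda>(u,x). u(k:=x)) (vecs k M \<times> X)"
proof (rule inj_onI, clarsimp)
  fix u x u' x' assume uu: "u \<in> vecs k M" "u' \<in> vecs k M" and e: "u(k := x) = u'(k := x')"
  have "x = x'" using e by (metis fun_upd_same)
  moreover have "u i = u' i" for i
  proof (cases "i = k")
    case True then show ?thesis using uu by (simp add: vecs_def)
  next
    case False then show ?thesis using fun_cong[OF e, of i] by simp
  qed
  ultimately show "u = u' \<and> x = x'" by auto
qed

lemma finite_vecs: "finite (vecs k M)"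
  by (induction k) (auto simp: vecs_0 vecs_Suc)

lemma vecs_fiber:
  assumes "0 < M'" "M' dvd M"
  shows "w \<in> vecs k M' \<Longrightarrow> card {v\<in>vecs k M. modv M' v = w} = (M div M')^k"
proof (induction k arbitrary: w)
  case 0
  then have "{v\<in>vecs 0 M. modv M' v = w} = vecs 0 M" by (auto simp: vecs_0 modv_def)
  then show ?case by (simp add: vecs_0)
next
  case (Suc k)
  have w0: "w(k:=0) \<in> vecs k M'" using Suc.prems by (auto simp: vecs_def)
  have wk: "0 \<le> w k" "w k < int M'" using Suc.prems by (auto simp: vecs_def)
  have eq: "{v\<in>vecs (Suc k) M. modv M' v = w} = (\<lambda>(u,x). u(k:=x)) `
      ({u\<in>vecs k M. modv M' u = w(k:=0)} \<times> {x\<in>{0..<int M}. x mod int M' = w k})"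
  proof (intro equalityI subsetI)
    fix v assume v: "v \<in> {v\<in>vecs (Suc k) M. modv M' v = w}"
    have "v = (\<lambda>(u,x). u(k:=x)) (v(k:=0), v k)" by auto
    moreover have "(v(k:=0), v k) \<in> {u\<in>vecs k M. modv M' u = w(k:=0)} \<times> {x\<in>{0..<int M}. x mod int M' = w k}"
      using v by (auto simp: vecs_def less_Suc_eq modv_def fun_eq_iff)
    ultimately show "v \<in> (\<lambda>(u,x). u(k:=x)) ` ({u\<in>vecs k M. modv M' u = w(k:=0)} \<times> {x\<in>{0..<int M}. x mod int M' = w k})" by blast
  next
    fix v assume "v \<in> (\<lambda>(u,x). u(k:=x)) ` ({u\<in>vecs k M. modv M' u = w(k:=0)} \<times> {x\<in>{0..<int M}. x mod int M' = w k})"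
    then obtain u x where ux: "v = u(k:=x)" "u \<in> vecs k M" "modv M' u = w(k:=0)" "x \<in> {0..<int M}" "x mod int M' = w k"
      by auto
    have "v \<in> vecs (Suc k) M" using ux by (auto simp: vecs_def less_Suc_eq)
    moreover have "modv M' v = w"
    proof
      fix i show "modv M' v i = w i"
      proof (cases "i = k")
        case True then show ?thesis using ux by (simp add: modv_def)
      next
        case False
        have "modv M' u i = (w(k:=0)) i" using ux(3) by simp
        with False ux(1) show ?thesis by (simp add: modv_def)
      qed
    qed
    ultimately show "v \<in> {v\<in>vecs (Suc k) M. modv M' v = w}" by auto
  qed
  have "card {v\<in>vecs (Suc k) M. modv M' v = w} =
     card ({u\<in>vecs k M. modv M' u = w(k:=0)} \<times> {x\<in>{0..<int M}. x mod int M' = w k})"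
    unfolding eq by (rule card_image, rule inj_on_subset[OF vecs_Suc_inj]) auto
  also have "\<dots> = card {u\<in>vecs k M. modv M' u = w(k:=0)} * card {x\<in>{0..<int M}. x mod int M' = w k}"
    by (rule card_cartesian_product)
  also have "\<dots> = (M div M')^k * (M div M')"
    by (simp only: Suc.IH[OF w0] card_mod_fiber[OF assms wk])
  finally show ?case by simp
qed

lemma card_vecs: "card (vecs k M) = M ^ k"
proof -
  have "card {v\<in>vecs k M. modv 1 v = (\<lambda>_. 0)} = (M div 1)^k"
    by (rule vecs_fiber) (auto simp: vecs_def)
  moreover have "{v\<in>vecs k M. modv 1 v = (\<lambda>_. 0)} = vecs k M" by (auto simp: modv_def)
  ultimately show ?thesis by simp
qed


definition sym0 :: "nat \<Rightarrow> nat \<Rightarrow> (nat \<Rightarrow> nat \<Rightarrow> int) set" where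
  "sym0 n M = {A. (\<forall>i j. i<n \<and> j<n \<longrightarrow> A i j \<in> {0..<int M} \<and> A i j = A j i) \<and>
                  (\<forall>i j. \<not>(i<n \<and> j<n) \<longrightarrow> A i j = 0)}"
definition ext :: "nat \<Rightarrow> (nat \<Rightarrow> nat \<Rightarrow> int) \<Rightarrow> (nat \<Rightarrow> int) \<Rightarrow> int \<Rightarrow> nat \<Rightarrow> nat \<Rightarrow> int" where
  "ext k C v a = (\<lambda>i j. if i<k \<and> j<k then C i j else if i=k \<and> j<k then v j
     else if j=k \<and> i<k then v i else if i=k \<and> j=k then a else 0)"
definition modm :: "nat \<Rightarrow> (nat \<Rightarrow> nat \<Rightarrow> int) \<Rightarrow> nat \<Rightarrow> nat \<Rightarrow> int" where
  "modm M A = (\<lambda>i j. A i j mod int M)"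
definition trunc :: "nat \<Rightarrow> (nat \<Rightarrow> nat \<Rightarrow> int) \<Rightarrow> nat \<Rightarrow> nat \<Rightarrow> int" where
  "trunc k A = (\<lambda>i j. if i<k \<and> j<k then A i j else 0)"
definition colk :: "nat \<Rightarrow> (nat \<Rightarrow> nat \<Rightarrow> int) \<Rightarrow> nat \<Rightarrow> int" where
  "colk k A = (\<lambda>i. if i<k then A i k else 0)"
fun tri :: "nat \<Rightarrow> nat" where "tri 0 = 0" | "tri (Suc k) = tri k + Suc k"

lemma sym0_0: "sym0 0 M = {\<lambda>_ _. 0}"
  unfolding sym0_def by (auto simp: fun_eq_iff)

lemma ext_in: "C \<in> sym0 k M \<Longrightarrow> v \<in> vecs k M \<Longrightarrow> a \<in> {0..<int M} \<Longrightarrow> ext k C v a \<in> sym0 (Suc k) M"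
  unfolding sym0_def vecs_def ext_def by (auto simp: less_Suc_eq)

lemma ext_decomp: "A \<in> sym0 (Suc k) M \<Longrightarrow> A = ext k (trunc k A) (colk k A) (A k k)"
  unfolding sym0_def ext_def trunc_def colk_def fun_eq_iff
  by (auto simp: less_Suc_eq)

lemma trunc_in: "A \<in> sym0 (Suc k) M \<Longrightarrow> trunc k A \<in> sym0 k M"
  unfolding sym0_def trunc_def by auto

lemma colk_in: "A \<in> sym0 (Suc k) M \<Longrightarrow> colk k A \<in> vecs k M"
  unfolding sym0_def colk_def vecs_def by auto

lemma diag_in: "A \<in> sym0 (Suc k) M \<Longrightarrow> A k k \<in> {0..<int M}"
  unfolding sym0_def by auto

lemma ext_parts:
  assumes "\<forall>i j. \<not>(i<k \<and> j<k) \<longrightarrow> C i j = 0" "\<forall>i. k \<le> i \<longrightarrow> v i = 0"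
  shows "trunc k (ext k C v a) = C" "colk k (ext k C v a) = v" "ext k C v a k k = a"
  using assms unfolding trunc_def colk_def ext_def fun_eq_iff by auto

lemma sym0_zero: "C \<in> sym0 k M \<Longrightarrow> \<forall>i j. \<not>(i<k \<and> j<k) \<longrightarrow> C i j = 0"
  unfolding sym0_def by auto
lemma vecs_zero: "v \<in> vecs k M \<Longrightarrow> \<forall>i. k \<le> i \<longrightarrow> v i = 0"
  unfolding vecs_def by auto

lemma ext_eq_iff:
  assumes "C \<in> sym0 k M" "v \<in> vecs k M" "C' \<in> sym0 k M'" "v' \<in> vecs k M'"
  shows "ext k C v a = ext k C' v' a' \<longleftrightarrow> C = C' \<and> v = v' \<and> a = a'"
  by (metis ext_parts sym0_zero vecs_zero assms)

lemma ext_inj: "inj_on (\<lambda>(C,v,a). ext k C v a) (sym0 k M \<times> vecs k M \<times> X)"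
  by (rule inj_onI) (auto simp: ext_eq_iff)

lemma sym0_Suc: "sym0 (Suc k) M = (\<lambda>(C,v,a). ext k C v a) ` (sym0 k M \<times> vecs k M \<times> {0..<int M})"
proof (intro equalityI subsetI)
  fix A assume A: "A \<in> sym0 (Suc k) M"
  then have "A = (\<lambda>(C,v,a). ext k C v a) (trunc k A, colk k A, A k k)" using ext_decomp by simp
  moreover have "(trunc k A, colk k A, A k k) \<in> sym0 k M \<times> vecs k M \<times> {0..<int M}"
    using A trunc_in colk_in diag_in by blast
  ultimately show "A \<in> (\<lambda>(C,v,a). ext k C v a) ` (sym0 k M \<times> vecs k M \<times> {0..<int M})" by blast
qed (auto intro: ext_in)

lemma finite_sym0: "finite (sym0 k M)"
  by (induction k) (auto simp: sym0_0 sym0_Suc finite_vecs)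

lemma modm_ext: "modm M' (ext k C v a) = ext k (modm M' C) (modv M' v) (a mod int M')"
  unfolding modm_def modv_def ext_def by (auto simp: fun_eq_iff)

lemma modm_sym0: "C \<in> sym0 k M \<Longrightarrow> 0 < M' \<Longrightarrow> modm M' C \<in> sym0 k M'"
  unfolding modm_def sym0_def by auto

lemma modv_vecs: "v \<in> vecs k M \<Longrightarrow> 0 < M' \<Longrightarrow> modv M' v \<in> vecs k M'"
  unfolding modv_def vecs_def by auto

lemma sym0_fiber:
  assumes "0 < M'" "M' dvd M"
  shows "D \<in> sym0 k M' \<Longrightarrow> card {C\<in>sym0 k M. modm M' C = D} = (M div M')^(tri k)"
proof (induction k arbitrary: D)
  case 0
  then have "{C\<in>sym0 0 M. modm M' C = D} = sym0 0 M" by (auto simp: sym0_0 modm_def)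
  then show ?case by (simp add: sym0_0)
next
  case (Suc k)
  let ?E = "\<lambda>(C,v,a). ext k C v a"
  define D0 where "D0 = trunc k D"
  define w0 where "w0 = colk k D"
  define d0 where "d0 = D k k"
  have D: "D = ext k D0 w0 d0" using ext_decomp[OF Suc.prems] by (simp add: D0_def w0_def d0_def)
  have D0: "D0 \<in> sym0 k M'" using trunc_in[OF Suc.prems] by (simp add: D0_def)
  have w0: "w0 \<in> vecs k M'" using colk_in[OF Suc.prems] by (simp add: w0_def)
  have d0: "0 \<le> d0" "d0 < int M'" using diag_in[OF Suc.prems] by (auto simp: d0_def)
  let ?F1 = "{C\<in>sym0 k M. modm M' C = D0}"
  let ?F2 = "{v\<in>vecs k M. modv M' v = w0}"
  let ?F3 = "{a\<in>{0..<int M}. a mod int M' = d0}"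
  have eq: "{C\<in>sym0 (Suc k) M. modm M' C = D} = ?E ` (?F1 \<times> ?F2 \<times> ?F3)"
  proof (intro equalityI subsetI)
    fix C assume C: "C \<in> {C\<in>sym0 (Suc k) M. modm M' C = D}"
    then have Cs: "C \<in> sym0 (Suc k) M" and Cm: "modm M' C = D" by auto
    have Ce: "C = ext k (trunc k C) (colk k C) (C k k)" using ext_decomp[OF Cs] .
    have t: "trunc k C \<in> sym0 k M" and c: "colk k C \<in> vecs k M" and dd: "C k k \<in> {0..<int M}"
      using trunc_in[OF Cs] colk_in[OF Cs] diag_in[OF Cs] by auto
    have "ext k (modm M' (trunc k C)) (modv M' (colk k C)) (C k k mod int M') = ext k D0 w0 d0"
      using Cm D Ce modm_ext by metis
    then have "modm M' (trunc k C) = D0 \<and> modv M' (colk k C) = w0 \<and> C k k mod int M' = d0"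
      using ext_eq_iff[OF modm_sym0[OF t assms(1)] modv_vecs[OF c assms(1)] D0 w0] by blast
    then have "(trunc k C, colk k C, C k k) \<in> ?F1 \<times> ?F2 \<times> ?F3" using t c dd by auto
    then show "C \<in> ?E ` (?F1 \<times> ?F2 \<times> ?F3)" using Ce by force
  next
    fix C assume "C \<in> ?E ` (?F1 \<times> ?F2 \<times> ?F3)"
    then obtain C0 v a where C: "C = ext k C0 v a" "C0 \<in> ?F1" "v \<in> ?F2" "a \<in> ?F3" by auto
    have "C \<in> sym0 (Suc k) M" using C ext_in by auto
    moreover have "modm M' C = D" using C D modm_ext by auto
    ultimately show "C \<in> {C\<in>sym0 (Suc k) M. modm M' C = D}" by auto
  qed
  have "card {C\<in>sym0 (Suc k) M. modm M' C = D} = card (?F1 \<times> ?F2 \<times> ?F3)"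
    unfolding eq by (rule card_image, rule inj_on_subset[OF ext_inj]) auto
  also have "\<dots> = card ?F1 * (card ?F2 * card ?F3)" by (simp add: card_cartesian_product)
  also have "\<dots> = (M div M')^(tri k) * ((M div M')^k * (M div M'))"
    by (simp only: Suc.IH[OF D0] vecs_fiber[OF assms w0] card_mod_fiber[OF assms d0])
  finally show ?case by (simp add: power_add)
qed

lemma card_sym0: "card (sym0 k M) = M ^ tri k"
proof -
  have "card {C\<in>sym0 k M. modm 1 C = (\<lambda>_ _. 0)} = (M div 1)^(tri k)"
    by (rule sym0_fiber) (auto simp: sym0_def)
  moreover have "{C\<in>sym0 k M. modm 1 C = (\<lambda>_ _. 0)} = sym0 k M" by (auto simp: modm_def)
  ultimately show ?thesis by simp
qed

lemma card_sym0_Suc_pred: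
  "card {A \<in> sym0 (Suc k) M. Q A} =
   card {x \<in> sym0 k M \<times> (vecs k M \<times> {0..<int M}). Q (ext k (fst x) (fst (snd x)) (snd (snd x)))}"
proof -
  let ?E = "\<lambda>(C,v,a). ext k C v a"
  let ?X = "{x \<in> sym0 k M \<times> (vecs k M \<times> {0..<int M}). Q (ext k (fst x) (fst (snd x)) (snd (snd x)))}"
  have "{A \<in> sym0 (Suc k) M. Q A} = ?E ` ?X"
  proof (intro equalityI subsetI)
    fix A assume "A \<in> {A \<in> sym0 (Suc k) M. Q A}"
    then obtain C v a where "A = ext k C v a" "(C,v,a) \<in> sym0 k M \<times> vecs k M \<times> {0..<int M}" "Q A"
      unfolding sym0_Suc by auto
    then have "(C,v,a) \<in> ?X" "A = ?E (C,v,a)" by auto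
    then show "A \<in> ?E ` ?X" by blast
  next
    fix A assume "A \<in> ?E ` ?X"
    then show "A \<in> {A \<in> sym0 (Suc k) M. Q A}" using ext_in by auto
  qed
  moreover have "inj_on ?E ?X" by (rule inj_on_subset[OF ext_inj]) auto
  ultimately show ?thesis by (simp add: card_image)
qed


lemma det_cong:
  fixes A B :: "int mat"
  assumes "A \<in> carrier_mat n n" "B \<in> carrier_mat n n"
    "\<And>i j. i<n \<Longrightarrow> j<n \<Longrightarrow> [A$$(i,j) = B$$(i,j)] (mod m)"
  shows "[det A = det B] (mod m)"
  unfolding det_def'[OF assms(1)] det_def'[OF assms(2)]
  by (intro cong_sum cong_mult cong_refl cong_prod) (auto intro!: assms(3) simp: permutes_in_image)

lemma mat_minus_plus_cancel:
  fixes A B :: "int mat"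
  assumes "A \<in> carrier_mat n m" "B \<in> carrier_mat n m"
  shows "(A - B) + B = A"
proof (rule eq_matI)
  fix i j assume "i < dim_row A" "j < dim_col A"
  then show "(A - B + B) $$ (i, j) = A $$ (i, j)" using assms by simp
qed (use assms in auto)

lemma schur_gen:
  fixes C V U B X :: "int mat"
  assumes C: "C \<in> carrier_mat k k" and V: "V \<in> carrier_mat k r" and U: "U \<in> carrier_mat r k"
    and B: "B \<in> carrier_mat r r" and X: "X \<in> carrier_mat k r"
    and cg: "\<And>i j. i < k \<Longrightarrow> j < r \<Longrightarrow> [V $$ (i,j) = (X * B) $$ (i,j)] (mod m)"
  shows "[det (four_block_mat C V U B) = det (C - X * U) * det B] (mod m)"
proof -
  let ?E = "four_block_mat (1\<^sub>m k) X (0\<^sub>m r k) (1\<^sub>m r)"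
  let ?A' = "four_block_mat (C - X * U) (V - X * B) U B"
  let ?A'' = "four_block_mat (C - X * U) (0\<^sub>m k r) U B"
  have XU: "X * U \<in> carrier_mat k k" by (rule mult_carrier_mat[OF X U])
  have XB: "X * B \<in> carrier_mat k r" by (rule mult_carrier_mat[OF X B])
  have CXU: "C - X * U \<in> carrier_mat k k" by (rule minus_carrier_mat[OF XU])
  have VXB: "V - X * B \<in> carrier_mat k r" by (rule minus_carrier_mat[OF XB])
  have "?E * ?A' = four_block_mat (1\<^sub>m k * (C - X*U) + X * U) (1\<^sub>m k * (V - X*B) + X * B)
        (0\<^sub>m r k * (C - X*U) + 1\<^sub>m r * U) (0\<^sub>m r k * (V - X*B) + 1\<^sub>m r * B)"
    by (rule mult_four_block_mat[OF one_carrier_mat X zero_carrier_mat one_carrier_mat CXU VXB U B])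
  also have "\<dots> = four_block_mat C V U B"
    by (simp add: left_mult_one_mat[OF CXU] left_mult_one_mat[OF VXB] mat_minus_plus_cancel[OF C XU]
      mat_minus_plus_cancel[OF V XB] left_mult_zero_mat[OF CXU] left_mult_zero_mat[OF VXB]
      left_mult_one_mat[OF U] left_mult_one_mat[OF B] left_add_zero_mat[OF U] left_add_zero_mat[OF B])
  finally have eq: "four_block_mat C V U B = ?E * ?A'" by simp
  have E: "?E \<in> carrier_mat (k+r) (k+r)" by (rule four_block_carrier_mat[OF one_carrier_mat one_carrier_mat])
  have A': "?A' \<in> carrier_mat (k+r) (k+r)" by (rule four_block_carrier_mat[OF CXU B])
  have A'': "?A'' \<in> carrier_mat (k+r) (k+r)" by (rule four_block_carrier_mat[OF CXU B])
  have dE: "det ?E = 1"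
    using det_four_block_mat_lower_left_zero[OF one_carrier_mat X refl one_carrier_mat] by simp
  have d1: "det (four_block_mat C V U B) = det ?A'"
    unfolding eq det_mult[OF E A'] dE by simp
  have d2: "det ?A'' = det (C - X * U) * det B"
    by (rule det_four_block_mat_upper_right_zero[OF CXU refl U B])
  have "[det ?A' = det ?A''] (mod m)"
  proof (rule det_cong[OF A' A''])
    fix i j assume ij: "i < k + r" "j < k + r"
    have dims: "dim_row (C - X * U) = k" "dim_col (C - X * U) = k" "dim_row B = r" "dim_col B = r"
      using CXU B by auto
    show "[?A' $$ (i,j) = ?A'' $$ (i,j)] (mod m)"
    proof (cases "i < k \<and> \<not> j < k")
      case True
      then have jk: "j - k < r" using ij by arith
      have "[V $$ (i,j-k) = (X * B) $$ (i,j-k)] (mod m)" using cg True jk by simp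
      then have "[V $$ (i,j-k) - (X * B) $$ (i,j-k) = 0] (mod m)"
        by (simp add: cong_iff_dvd_diff cong_0_iff)
      moreover have "?A' $$ (i,j) = V $$ (i,j-k) - (X * B) $$ (i,j-k)"
        using True ij jk dims index_minus_mat(1)[of i "X * B" "j - k" V] XB by simp
      moreover have "?A'' $$ (i,j) = 0" using True ij jk dims by simp
      ultimately show ?thesis by simp
    next
      case False
      then have "?A' $$ (i,j) = ?A'' $$ (i,j)" using ij dims by auto
      then show ?thesis by simp
    qed
  qed
  then show ?thesis using d1 d2 by simp
qed


lemma to_mat_carrier: "to_mat n A \<in> carrier_mat n n"
  by (simp add: to_mat_def)

lemma to_mat_split:
  "to_mat (k + r) A = four_block_mat (to_mat k A) (mat k r (\<lambda>(i,l). A i (k+l)))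
     (mat r k (\<lambda>(l,j). A (k+l) j)) (mat r r (\<lambda>(l,l'). A (k+l) (k+l')))"
  by (rule eq_matI) (auto simp: to_mat_def)

lemma schur1:
  fixes A :: "nat \<Rightarrow> nat \<Rightarrow> int"
  assumes ab: "[A k k * b = 1] (mod m)"
  shows "[det (to_mat (Suc k) A) = det (to_mat k (\<lambda>i j. A i j - b * A i k * A k j)) * A k k] (mod m)"
proof -
  let ?C = "to_mat k A"
  let ?V = "mat k 1 (\<lambda>(i,l). A i (k+l))"
  let ?U = "mat 1 k (\<lambda>(l,j). A (k+l) j)"
  let ?B = "mat 1 1 (\<lambda>(l,l'). A (k+l) (k+l'))"
  let ?X = "mat k 1 (\<lambda>(i,l). b * A i k)"
  have sp: "to_mat (Suc k) A = four_block_mat ?C ?V ?U ?B" using to_mat_split[of k 1 A] by simp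
  have "[det (four_block_mat ?C ?V ?U ?B) = det (?C - ?X * ?U) * det ?B] (mod m)"
  proof (rule schur_gen[OF to_mat_carrier mat_carrier mat_carrier mat_carrier mat_carrier])
    fix i j :: nat assume ij: "i < k" "j < 1"
    then have j0: "j = 0" by simp
    have "(?X * ?B) $$ (i,j) = b * A i k * A k k" using ij j0 by (simp add: scalar_prod_def)
    moreover have "[A i k * (A k k * b) = A i k * 1] (mod m)" by (rule cong_mult[OF cong_refl ab])
    ultimately show "[?V $$ (i,j) = (?X * ?B) $$ (i,j)] (mod m)" using ij j0
      by (simp add: ac_simps cong_sym)
  qed
  moreover have "?C - ?X * ?U = to_mat k (\<lambda>i j. A i j - b * A i k * A k j)"
    by (rule eq_matI) (auto simp: to_mat_def scalar_prod_def)
  moreover have "det ?B = A k k" by (simp add: det_single)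
  ultimately show ?thesis using sp by simp
qed

lemma det_2x2:
  fixes f :: "nat \<Rightarrow> nat \<Rightarrow> int"
  shows "det (mat 2 2 (\<lambda>(l,l'). f l l')) = f 0 0 * f 1 1 - f 0 1 * f 1 0"
proof -
  let ?B = "mat 2 2 (\<lambda>(l,l'). f l l')"
  let ?b = "\<lambda>z. mat 1 1 (\<lambda>_. z::int)"
  have B: "?B = four_block_mat (?b (f 0 0)) (?b (f 0 1)) (?b (f 1 0)) (?b (f 1 1))"
    by (rule eq_matI) (auto simp: less_Suc_eq)
  have c: "?b (f 1 0) * ?b (f 1 1) = ?b (f 1 1) * ?b (f 1 0)"
    by (rule eq_matI) (auto simp: scalar_prod_def)
  have "det ?B = det (?b (f 0 0) * ?b (f 1 1) - ?b (f 0 1) * ?b (f 1 0))"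
    unfolding B by (rule det_four_block_mat[OF mat_carrier mat_carrier mat_carrier mat_carrier c])
  also have "\<dots> = f 0 0 * f 1 1 - f 0 1 * f 1 0"
    by (subst det_single) (auto simp: scalar_prod_def)
  finally show ?thesis by simp
qed

lemma schur2:
  fixes A :: "nat \<Rightarrow> nat \<Rightarrow> int" and k :: nat
  defines "c \<equiv> A k k" and "x \<equiv> A k (Suc k)" and "y \<equiv> A (Suc k) k" and "a \<equiv> A (Suc k) (Suc k)"
  assumes de: "[(c * a - x * y) * e = 1] (mod m)"
  shows "[det (to_mat (Suc (Suc k)) A) = det (to_mat k (\<lambda>i j. A i j -
     e * ((A i k * a - A i (Suc k) * y) * A k j + (A i (Suc k) * c - A i k * x) * A (Suc k) j)))
     * (c * a - x * y)] (mod m)"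
proof -
  let ?C = "to_mat k A"
  let ?V = "mat k 2 (\<lambda>(i,l). A i (k+l))"
  let ?U = "mat 2 k (\<lambda>(l,j). A (k+l) j)"
  let ?B = "mat 2 2 (\<lambda>(l,l'). A (k+l) (k+l'))"
  let ?X = "mat k 2 (\<lambda>(i,l). if l = 0 then e * (A i k * a - A i (Suc k) * y) else e * (A i (Suc k) * c - A i k * x))"
  have sp: "to_mat (Suc (Suc k)) A = four_block_mat ?C ?V ?U ?B" using to_mat_split[of k 2 A]
    by (simp add: numeral_2_eq_2)
  have s2: "{0..<2::nat} = {0, 1}" by auto
  have "[det (four_block_mat ?C ?V ?U ?B) = det (?C - ?X * ?U) * det ?B] (mod m)"
  proof (rule schur_gen[OF to_mat_carrier mat_carrier mat_carrier mat_carrier mat_carrier])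
    fix i j :: nat assume ij: "i < k" "j < 2"
    have XB: "(?X * ?B) $$ (i,j) = ?X $$ (i,0) * ?B $$ (0,j) + ?X $$ (i,1) * ?B $$ (1,j)"
      using ij by (simp add: scalar_prod_def s2)
    show "[?V $$ (i,j) = (?X * ?B) $$ (i,j)] (mod m)"
    proof (cases "j = 0")
      case True
      have "(?X * ?B) $$ (i,j) = A i k * ((c * a - x * y) * e)" unfolding XB using ij True
        by (simp add: c_def x_def y_def a_def algebra_simps)
      moreover have "[A i k * ((c * a - x * y) * e) = A i k * 1] (mod m)" by (rule cong_mult[OF cong_refl de])
      ultimately show ?thesis using ij True by (simp add: cong_sym)
    next
      case False
      then have j1: "j = 1" using ij by simp
      have "(?X * ?B) $$ (i,j) = A i (Suc k) * ((c * a - x * y) * e)" unfolding XB using ij j1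
        by (simp add: c_def x_def y_def a_def algebra_simps)
      moreover have "[A i (Suc k) * ((c * a - x * y) * e) = A i (Suc k) * 1] (mod m)" by (rule cong_mult[OF cong_refl de])
      ultimately show ?thesis using ij j1 by (simp add: cong_sym)
    qed
  qed
  moreover have "?C - ?X * ?U = to_mat k (\<lambda>i j. A i j -
     e * ((A i k * a - A i (Suc k) * y) * A k j + (A i (Suc k) * c - A i k * x) * A (Suc k) j))"
    by (rule eq_matI) (auto simp: to_mat_def scalar_prod_def s2 algebra_simps)
  moreover have "det ?B = c * a - x * y"
    using det_2x2[of "\<lambda>l l'. A (k+l) (k+l')"] by (simp add: c_def x_def y_def a_def)
  ultimately show ?thesis using sp by simp
qed

definition sw :: "nat \<Rightarrow> nat \<Rightarrow> nat \<Rightarrow> nat" where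
  "sw j l i = (if i = j then l else if i = l then j else i)"

lemma det_swap_sym:
  assumes "j < n" "l < n"
  shows "det (to_mat n (\<lambda>i i'. A (sw j l i) (sw j l i'))) = det (to_mat n A)"
proof (cases "j = l")
  case True then have "(\<lambda>i i'. A (sw j l i) (sw j l i')) = A" by (auto simp: sw_def fun_eq_iff)
  then show ?thesis by simp
next
  case False
  have "to_mat n (\<lambda>i i'. A (sw j l i) (sw j l i')) = swaprows j l (swapcols j l (to_mat n A))"
    by (rule eq_matI) (use assms in \<open>auto simp: to_mat_def sw_def\<close>)
  moreover have sc: "swapcols j l (to_mat n A) \<in> carrier_mat n n" using to_mat_carrier by simp
  ultimately show ?thesis
    using det_swaprows[OF assms False sc] det_swapcols[OF assms False to_mat_carrier] by simp
qed

lemma to_mat_multrow: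
  assumes "k < n" "\<forall>j<n. p dvd A k j"
  shows "to_mat n A = multrow k p (to_mat n (\<lambda>i j. if i = k then A i j div p else A i j))"
  by (rule eq_matI) (use assms in \<open>auto simp: to_mat_def\<close>)

lemma to_mat_multcol:
  assumes "k < n" "\<forall>i<n. p dvd A i k"
  shows "to_mat n A = multcol k p (to_mat n (\<lambda>i j. if j = k then A i j div p else A i j))"
  by (rule eq_matI) (use assms in \<open>auto simp: to_mat_def\<close>)

lemma det_multcol:
  assumes "k < n" "A \<in> carrier_mat n n"
  shows "det (multcol k a A) = a * det (A :: int mat)"
proof -
  have "det (multcol k a A) = det (A * multrow_mat n k a)" by (simp add: multcol_mat[OF assms(2)])
  also have "\<dots> = det A * det (multrow_mat n k a)" by (rule det_mult[OF assms(2) multrow_mat_carrier])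
  also have "\<dots> = a * det A" by (simp add: det_multrow_mat[OF assms(1)])
  finally show ?thesis .
qed

lemma to_mat_cong: "(\<And>i j. i < n \<Longrightarrow> j < n \<Longrightarrow> A i j = B i j) \<Longrightarrow> to_mat n A = to_mat n B"
  by (rule eq_matI) (auto simp: to_mat_def)


definition good :: "nat \<Rightarrow> nat \<Rightarrow> (nat \<Rightarrow> nat \<Rightarrow> int) \<Rightarrow> bool" where
  "good n M A \<longleftrightarrow> \<not> int M dvd det (to_mat n A)"
definition Ncnt :: "nat \<Rightarrow> nat \<Rightarrow> nat" where
  "Ncnt n M = card {A \<in> sym0 n M. good n M A}"
definition shift :: "nat \<Rightarrow> nat \<Rightarrow> (nat \<Rightarrow> nat \<Rightarrow> int) \<Rightarrow> (nat \<Rightarrow> nat \<Rightarrow> int) \<Rightarrow> nat \<Rightarrow> nat \<Rightarrow> int" where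
  "shift k M D C = (\<lambda>i j. if i<k \<and> j<k then (C i j - D i j) mod int M else 0)"

lemma shift_in:
  assumes "0 < M" "\<And>i j. i<k \<Longrightarrow> j<k \<Longrightarrow> D i j = D j i" "C \<in> sym0 k M"
  shows "shift k M D C \<in> sym0 k M"
  using assms unfolding sym0_def shift_def by auto

lemma shift_inv:
  assumes "C \<in> sym0 k M" "\<And>i j. D' i j = - D i j"
  shows "shift k M D' (shift k M D C) = C"
proof (intro ext)
  fix i j
  show "shift k M D' (shift k M D C) i j = C i j"
  proof (cases "i<k \<and> j<k")
    case True
    then have r: "0 \<le> C i j" "C i j < int M" using assms(1) by (auto simp: sym0_def)
    have "((C i j - D i j) mod int M - D' i j) mod int M = ((C i j - D i j) - D' i j) mod int M"
      by (simp add: mod_diff_left_eq)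
    also have "\<dots> = C i j" using assms(2) r by simp
    finally show ?thesis using True by (simp add: shift_def)
  next
    case False then show ?thesis using assms(1) unfolding shift_def sym0_def by auto
  qed
qed

lemma shift_bij:
  assumes "0 < M" "\<And>i j. i<k \<Longrightarrow> j<k \<Longrightarrow> D i j = D j i"
  shows "bij_betw (shift k M D) (sym0 k M) (sym0 k M)"
proof (rule bij_betw_byWitness[where f'="shift k M (\<lambda>i j. - D i j)"])
  have s': "\<And>i j. i<k \<Longrightarrow> j<k \<Longrightarrow> - D i j = - D j i" using assms(2) by simp
  show "\<forall>a\<in>sym0 k M. shift k M (\<lambda>i j. - D i j) (shift k M D a) = a" by (auto intro: shift_inv)
  show "\<forall>a\<in>sym0 k M. shift k M D (shift k M (\<lambda>i j. - D i j) a) = a" by (auto intro: shift_inv)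
  show "shift k M D ` sym0 k M \<subseteq> sym0 k M" using shift_in[OF assms] by auto
  show "shift k M (\<lambda>i j. - D i j) ` sym0 k M \<subseteq> sym0 k M" using shift_in[OF assms(1) s'] by auto
qed

lemma det_shift: "[det (to_mat k (shift k M D C)) = det (to_mat k (\<lambda>i j. C i j - D i j))] (mod int M)"
  by (rule det_cong[OF to_mat_carrier to_mat_carrier]) (simp add: to_mat_def shift_def cong_def)

lemma inv_exists:
  assumes "prime p" "M = p^m" "\<not> int p dvd d"
  shows "\<exists>e. [d * e = 1] (mod int M)"
proof -
  have "coprime (int p) d" using assms by (intro prime_imp_coprime) auto
  then have "coprime (int p ^ m) d" by simp
  then have "coprime d (int M)" using assms(2) by (simp add: coprime_commute)
  then show ?thesis by (rule cong_solve_coprime_int)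
qed

lemma dvd_mult_unit:
  assumes "prime p" "M = p^m" "\<not> int p dvd d"
  shows "int M dvd x * d \<longleftrightarrow> int M dvd x"
proof -
  have "coprime (int p) d" using assms by (intro prime_imp_coprime) auto
  then have "coprime (int p ^ m) d" by simp
  then have "coprime (int M) d" using assms(2) by simp
  then show ?thesis by (rule coprime_dvd_mult_left_iff)
qed

lemma count_via_shift:
  assumes "0 < M" "\<And>i j. i<k \<Longrightarrow> j<k \<Longrightarrow> D i j = D j i"
    and "\<And>C. C \<in> sym0 k M \<Longrightarrow> G C \<longleftrightarrow> Q (shift k M D C)"
  shows "card {C \<in> sym0 k M. G C} = card {C \<in> sym0 k M. Q C}"
proof -
  have "card {C \<in> sym0 k M. G C} = card {C \<in> sym0 k M. Q (shift k M D C)}"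
    using assms(3) by (metis (mono_tags, lifting) Collect_cong)
  also have "\<dots> = card {C \<in> sym0 k M. Q C}" by (rule card_bij_pred[OF shift_bij[OF assms(1,2)]])
  finally show ?thesis .
qed

lemma inner1:
  assumes p: "prime p" "M = p^m" and a: "\<not> int p dvd a"
  shows "card {C \<in> sym0 k M. good (Suc k) M (ext k C v a)} = Ncnt k M"
proof -
  have M0: "0 < M" using p by (simp add: prime_gt_0_nat)
  obtain b where b: "[a * b = 1] (mod int M)" using inv_exists[OF p a] by blast
  define D where "D = (\<lambda>i j. b * v i * v j)"
  have Ds: "\<And>i j. i<k \<Longrightarrow> j<k \<Longrightarrow> D i j = D j i" by (simp add: D_def ac_simps)
  have key: "good (Suc k) M (ext k C v a) \<longleftrightarrow> good k M (shift k M D C)" for C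
  proof -
    define A where "A = ext k C v a"
    have Akk: "A k k = a" by (simp add: A_def ext_def)
    have s1: "[det (to_mat (Suc k) A) = det (to_mat k (\<lambda>i j. A i j - b * A i k * A k j)) * A k k] (mod int M)"
      by (rule schur1) (simp add: Akk b)
    have e1: "to_mat k (\<lambda>i j. A i j - b * A i k * A k j) = to_mat k (\<lambda>i j. C i j - D i j)"
      by (rule to_mat_cong) (simp add: A_def ext_def D_def)
    have s2: "[det (to_mat k (\<lambda>i j. C i j - D i j)) = det (to_mat k (shift k M D C))] (mod int M)"
      using det_shift[of k M D C] by (simp add: cong_sym)
    have "[det (to_mat (Suc k) A) = det (to_mat k (shift k M D C)) * a] (mod int M)"
      using cong_trans[OF s1[unfolded e1 Akk] cong_mult[OF s2 cong_refl]] .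
    then show ?thesis unfolding good_def A_def[symmetric]
      using cong_dvd_iff dvd_mult_unit[OF p a] by metis
  qed
  show ?thesis unfolding Ncnt_def by (rule count_via_shift[where Q="good k M", OF M0 Ds key])
qed

lemma inner2c:
  assumes p: "prime p" "M = p^m" and pa: "int p dvd a" and px: "\<not> int p dvd v k"
  shows "card {C \<in> sym0 k M. good (Suc (Suc k)) M (ext (Suc k) (ext k C w c) v a)} = Ncnt k M"
proof -
  have M0: "0 < M" using p by (simp add: prime_gt_0_nat)
  have pi: "prime (int p)" using p by simp
  define d where "d = c * a - v k * v k"
  have pd: "\<not> int p dvd d"
  proof
    assume "int p dvd d"
    moreover have "int p dvd c * a" using pa by simp
    ultimately have "int p dvd c * a - d" by (rule dvd_diff[rotated])
    then have "int p dvd v k * v k" by (simp add: d_def)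
    then show False using px pi by (simp add: prime_dvd_mult_iff)
  qed
  obtain e where e: "[d * e = 1] (mod int M)" using inv_exists[OF p pd] by blast
  define D where "D = (\<lambda>i j. e * ((w i * a - v i * v k) * w j + (v i * c - w i * v k) * v j))"
  have Ds: "\<And>i j. i<k \<Longrightarrow> j<k \<Longrightarrow> D i j = D j i" by (simp add: D_def algebra_simps)
  have key: "good (Suc (Suc k)) M (ext (Suc k) (ext k C w c) v a) \<longleftrightarrow> good k M (shift k M D C)" for C
  proof -
    define A where "A = ext (Suc k) (ext k C w c) v a"
    have vals: "A k k = c" "A k (Suc k) = v k" "A (Suc k) k = v k" "A (Suc k) (Suc k) = a"
      by (simp_all add: A_def ext_def)
    have de: "[(A k k * A (Suc k) (Suc k) - A k (Suc k) * A (Suc k) k) * e = 1] (mod int M)"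
      using e by (simp add: vals d_def)
    have s1: "[det (to_mat (Suc (Suc k)) A) = det (to_mat k (\<lambda>i j. A i j -
     e * ((A i k * A (Suc k) (Suc k) - A i (Suc k) * A (Suc k) k) * A k j + (A i (Suc k) * A k k - A i k * A k (Suc k)) * A (Suc k) j)))
     * (A k k * A (Suc k) (Suc k) - A k (Suc k) * A (Suc k) k)] (mod int M)"
      by (rule schur2[OF de])
    have e1: "to_mat k (\<lambda>i j. A i j -
     e * ((A i k * A (Suc k) (Suc k) - A i (Suc k) * A (Suc k) k) * A k j + (A i (Suc k) * A k k - A i k * A k (Suc k)) * A (Suc k) j))
      = to_mat k (\<lambda>i j. C i j - D i j)"
      by (rule to_mat_cong) (simp add: A_def ext_def D_def)
    have e2: "A k k * A (Suc k) (Suc k) - A k (Suc k) * A (Suc k) k = d" by (simp add: vals d_def)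
    have s2: "[det (to_mat k (\<lambda>i j. C i j - D i j)) = det (to_mat k (shift k M D C))] (mod int M)"
      using det_shift[of k M D C] by (simp add: cong_sym)
    have "[det (to_mat (Suc (Suc k)) A) = det (to_mat k (shift k M D C)) * d] (mod int M)"
      using cong_trans[OF s1[unfolded e1 e2] cong_mult[OF s2 cong_refl]] .
    then show ?thesis unfolding good_def A_def[symmetric]
      using cong_dvd_iff dvd_mult_unit[OF p pd] by metis
  qed
  show ?thesis unfolding Ncnt_def by (rule count_via_shift[where Q="good k M", OF M0 Ds key])
qed

lemma inner2b:
  assumes p: "prime p" "M = p^m" and pa: "int p dvd a" and px: "\<not> int p dvd v k"
  shows "card {C \<in> sym0 (Suc k) M. good (Suc (Suc k)) M (ext (Suc k) C v a)} = Ncnt k M * (M^k * M)"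
proof -
  let ?Q = "\<lambda>C y. good (Suc (Suc k)) M (ext (Suc k) (ext k C (fst y) (snd y)) v a)"
  have "card {C \<in> sym0 (Suc k) M. good (Suc (Suc k)) M (ext (Suc k) C v a)}
     = card {x \<in> sym0 k M \<times> (vecs k M \<times> {0..<int M}). True \<and> ?Q (fst x) (snd x)}"
    using card_sym0_Suc_pred[of k M "\<lambda>C. good (Suc (Suc k)) M (ext (Suc k) C v a)"] by simp
  also have "\<dots> = Ncnt k M * card {y \<in> vecs k M \<times> {0..<int M}. True}"
    by (rule card_split_const[OF finite_sym0]) (auto intro!: inner2c[where v=v and k=k, OF p pa px] finite_vecs)
  also have "\<dots> = Ncnt k M * (M^k * M)" by (simp add: card_cartesian_product card_vecs)
  finally show ?thesis .
qed

definition permm :: "(nat \<Rightarrow> nat) \<Rightarrow> (nat \<Rightarrow> nat \<Rightarrow> int) \<Rightarrow> nat \<Rightarrow> nat \<Rightarrow> int" where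
  "permm s A = (\<lambda>i i'. A (s i) (s i'))"

lemma perm_ext:
  assumes "j < K" "l < K"
  shows "permm (sw j l) (ext K C u a) = ext K (permm (sw j l) C) (u \<circ> sw j l) a"
  unfolding permm_def ext_def fun_eq_iff using assms by (auto simp: sw_def)

lemma permm_sym0:
  assumes "j < K" "l < K" "C \<in> sym0 K M"
  shows "permm (sw j l) C \<in> sym0 K M"
proof -
  have a: "sw j l i < K \<longleftrightarrow> i < K" for i using assms(1,2) by (auto simp: sw_def)
  show ?thesis using assms(3) unfolding sym0_def permm_def by (auto simp: a)
qed

lemma permm_invol: "permm (sw j l) (permm (sw j l) C) = C"
  by (auto simp: permm_def sw_def fun_eq_iff)

lemma permm_bij:
  assumes "j < K" "l < K"
  shows "bij_betw (permm (sw j l)) (sym0 K M) (sym0 K M)"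
  by (rule bij_betw_byWitness[where f'="permm (sw j l)"])
     (auto intro: permm_sym0[OF assms] simp: permm_invol)

lemma good_permm: "j < n \<Longrightarrow> l < n \<Longrightarrow> good n M (permm (sw j l) A) \<longleftrightarrow> good n M A"
  unfolding good_def permm_def using det_swap_sym by simp

lemma vecs_sw: "j < K \<Longrightarrow> l < K \<Longrightarrow> v \<in> vecs K M \<Longrightarrow> v \<circ> sw j l \<in> vecs K M"
  unfolding vecs_def by (auto simp: sw_def)

lemma inner2:
  assumes p: "prime p" "M = p^m" and pa: "int p dvd a"
    and j: "j < Suc k" "\<not> int p dvd v j"
  shows "card {C \<in> sym0 (Suc k) M. good (Suc (Suc k)) M (ext (Suc k) C v a)} = Ncnt k M * (M^k * M)"
proof -
  let ?s = "sw j k"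
  have jk: "j < Suc k" "k < Suc k" using j by auto
  have jk2: "j < Suc (Suc k)" "k < Suc (Suc k)" using j by auto
  have eqv: "good (Suc (Suc k)) M (ext (Suc k) C v a) \<longleftrightarrow>
      good (Suc (Suc k)) M (ext (Suc k) (permm ?s C) (v \<circ> ?s) a)" for C
  proof -
    have "ext (Suc k) (permm ?s C) (v \<circ> ?s) a = permm ?s (ext (Suc k) C v a)"
      using perm_ext[OF jk, of C v a] by simp
    then show ?thesis using good_permm[OF jk2, of M] by simp
  qed
  have "card {C \<in> sym0 (Suc k) M. good (Suc (Suc k)) M (ext (Suc k) C v a)} =
     card {C \<in> sym0 (Suc k) M. good (Suc (Suc k)) M (ext (Suc k) (permm ?s C) (v \<circ> ?s) a)}"
    using eqv by simp
  also have "\<dots> = card {C \<in> sym0 (Suc k) M. good (Suc (Suc k)) M (ext (Suc k) C (v \<circ> ?s) a)}"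
    by (rule card_bij_pred[OF permm_bij[OF jk]])
  also have "\<dots> = Ncnt k M * (M^k * M)"
    by (rule inner2b[OF p pa]) (use j in \<open>simp add: sw_def\<close>)
  finally show ?thesis .
qed

lemma inner3:
  assumes p: "prime p" "M = p^m" "2 \<le> m" and v: "\<forall>i<k. int p dvd v i"
    and pa: "int p dvd a" and pa2: "\<not> int p^2 dvd a"
  shows "card {C \<in> sym0 k M. good (Suc k) M (ext k C v a)} = p^(tri k) * Ncnt k (p^(m-1))"
proof -
  define M1 where "M1 = p^(m-1)"
  have pp: "1 < p" using prime_gt_1_nat[OF p(1)] by simp
  have MM1: "M = p * M1" using p by (simp add: M1_def power_eq_if[of p m])
  have M0: "0 < M" and M10: "0 < M1" using pp p by (auto simp: M1_def)
  have M1M: "M1 dvd M" using MM1 by simp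
  have MdM1: "M div M1 = p" using MM1 M10 by simp
  define u where "u = a div int p"
  have au: "a = int p * u" using pa by (simp add: u_def)
  have pu: "\<not> int p dvd u"
  proof
    assume "int p dvd u"
    then have "int p * int p dvd int p * u" by simp
    then show False using pa2 au by (simp add: power2_eq_square)
  qed
  obtain b where b: "[u * b = 1] (mod int M)" using inv_exists[OF p(1,2) pu] by blast
  define D where "D = (\<lambda>i j. b * int p * (v i div int p) * (v j div int p))"
  have Ds: "\<And>i j. i<k \<Longrightarrow> j<k \<Longrightarrow> D i j = D j i" by (simp add: D_def ac_simps)
  have key: "good (Suc k) M (ext k C v a) \<longleftrightarrow> good k M1 (modm M1 (shift k M D C))" for C
  proof -
    define A where "A = ext k C v a"
    define A1 where "A1 = (\<lambda>i j. if i = k then A i j div int p else A i j)"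
    have row: "\<forall>j<Suc k. int p dvd A k j" using v pa by (auto simp: A_def ext_def less_Suc_eq)
    have dA: "det (to_mat (Suc k) A) = int p * det (to_mat (Suc k) A1)"
      unfolding to_mat_multrow[where A=A and k=k and n="Suc k", OF lessI row] A1_def
      by (rule det_multrow[OF lessI to_mat_carrier])
    have A1kk: "A1 k k = u" by (simp add: A1_def A_def ext_def u_def)
    have s1: "[det (to_mat (Suc k) A1) = det (to_mat k (\<lambda>i j. A1 i j - b * A1 i k * A1 k j)) * A1 k k] (mod int M)"
      by (rule schur1) (simp add: A1kk b)
    have e1: "to_mat k (\<lambda>i j. A1 i j - b * A1 i k * A1 k j) = to_mat k (\<lambda>i j. C i j - D i j)"
    proof (rule to_mat_cong)
      fix i j assume ij: "i < k" "j < k"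
      have "v i = int p * (v i div int p)" using v ij by simp
      then have "b * v i * (v j div int p) = b * int p * (v i div int p) * (v j div int p)"
        by (metis mult.assoc mult.commute)
      then show "A1 i j - b * A1 i k * A1 k j = C i j - D i j"
        using ij by (simp add: A1_def A_def ext_def D_def)
    qed
    have s2: "[det (to_mat k (\<lambda>i j. C i j - D i j)) = det (to_mat k (shift k M D C))] (mod int M)"
      using det_shift[of k M D C] by (simp add: cong_sym)
    have "[det (to_mat (Suc k) A1) = det (to_mat k (shift k M D C)) * u] (mod int M)"
      using cong_trans[OF s1[unfolded e1 A1kk] cong_mult[OF s2 cong_refl]] .
    then have s3: "[det (to_mat (Suc k) A1) = det (to_mat k (shift k M D C)) * u] (mod int M1)"
      by (rule cong_dvd_modulus) (use M1M in simp)
    have s4: "[det (to_mat k (shift k M D C)) = det (to_mat k (modm M1 (shift k M D C)))] (mod int M1)"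
      by (rule det_cong[OF to_mat_carrier to_mat_carrier]) (simp add: to_mat_def modm_def cong_def)
    have "good (Suc k) M A \<longleftrightarrow> \<not> int M1 dvd det (to_mat (Suc k) A1)"
      unfolding good_def dA MM1 using pp by simp
    also have "\<dots> \<longleftrightarrow> \<not> int M1 dvd det (to_mat k (shift k M D C)) * u"
      using cong_dvd_iff[OF s3] by simp
    also have "\<dots> \<longleftrightarrow> \<not> int M1 dvd det (to_mat k (shift k M D C))"
      using dvd_mult_unit[OF p(1) M1_def pu] by simp
    also have "\<dots> \<longleftrightarrow> good k M1 (modm M1 (shift k M D C))"
      unfolding good_def using cong_dvd_iff[OF s4] by simp
    finally show ?thesis by (simp add: A_def)
  qed
  have "card {C \<in> sym0 k M. good (Suc k) M (ext k C v a)} = card {C \<in> sym0 k M. good k M1 (modm M1 C)}"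
    by (rule count_via_shift[where Q="\<lambda>C. good k M1 (modm M1 C)", OF M0 Ds key])
  also have "\<dots> = (M div M1)^(tri k) * card {D \<in> sym0 k M1. good k M1 D}"
    by (rule card_fiber_const[OF finite_sym0 finite_sym0])
       (auto intro: modm_sym0[OF _ M10] sym0_fiber[OF M10 M1M])
  finally have "card {C \<in> sym0 k M. good (Suc k) M (ext k C v a)} = p^(tri k) * card {D \<in> sym0 k M1. good k M1 D}"
    unfolding MdM1 .
  then show ?thesis by (simp add: Ncnt_def M1_def)
qed

lemma int_div_lt: "0 \<le> (a::int) \<Longrightarrow> a < b * c \<Longrightarrow> 0 < b \<Longrightarrow> a div b < c"
  by (smt (verit) mult_div_mod_eq mult_left_less_imp_less pos_mod_sign)

lemma case4_det:
  assumes v: "\<forall>i<k. int p dvd v i" and a: "int p^2 dvd a"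
  shows "det (to_mat (Suc k) (ext k C v a)) =
         int p * int p * det (to_mat (Suc k) (ext k C (\<lambda>i. v i div int p) (a div int p^2)))"
proof -
  define A where "A = ext k C v a"
  define A1 where "A1 = (\<lambda>i j. if i = k then A i j div int p else A i j)"
  define A2 where "A2 = (\<lambda>i j. if j = k then A1 i j div int p else A1 i j)"
  have pa: "int p dvd a" using a by (metis dvd_mult_left power2_eq_square)
  have pa': "int p dvd a div int p" using a by (metis dvd_div_iff_mult power2_eq_square mult.commute pa dvd_mult_div_cancel dvd_times_right_cancel_iff dvd_0_left dvd_div_mult_self div_by_0 power_eq_0_iff)
  have row: "\<forall>j<Suc k. int p dvd A k j" using v pa by (auto simp: A_def ext_def less_Suc_eq)
  have col: "\<forall>i<Suc k. int p dvd A1 i k" using v pa' by (auto simp: A1_def A_def ext_def less_Suc_eq)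
  have dA: "det (to_mat (Suc k) A) = int p * det (to_mat (Suc k) A1)"
    unfolding to_mat_multrow[where A=A and k=k and n="Suc k", OF lessI row] A1_def
    by (rule det_multrow[OF lessI to_mat_carrier])
  have dA1: "det (to_mat (Suc k) A1) = int p * det (to_mat (Suc k) A2)"
    unfolding to_mat_multcol[where A=A1 and k=k and n="Suc k", OF lessI col] A2_def
    by (rule det_multcol[OF lessI to_mat_carrier])
  have e: "to_mat (Suc k) A2 = to_mat (Suc k) (ext k C (\<lambda>i. v i div int p) (a div int p^2))"
  proof (rule to_mat_cong)
    fix i j assume ij: "i < Suc k" "j < Suc k"
    have "a div int p div int p = a div int p^2" by (simp add: power2_eq_square zdiv_zmult2_eq)
    then show "A2 i j = ext k C (\<lambda>i. v i div int p) (a div int p^2) i j"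
      using ij by (auto simp: A2_def A1_def A_def ext_def less_Suc_eq)
  qed
  show ?thesis using dA dA1 e by (simp add: A_def)
qed

lemma vfiber4:
  assumes pp: "0 < p" and M: "M = p * M1" and M1: "M1 = p * M2" and M20: "0 < M2"
    and w: "w \<in> vecs k M2"
  shows "card {v \<in> {v \<in> vecs k M. \<forall>i<k. int p dvd v i}. modv M2 (\<lambda>i. v i div int p) = w} = p^k"
proof -
  have M10: "0 < M1" using M1 pp M20 by simp
  have eq: "{v \<in> {v \<in> vecs k M. \<forall>i<k. int p dvd v i}. modv M2 (\<lambda>i. v i div int p) = w}
      = (\<lambda>s i. int p * s i) ` {s \<in> vecs k M1. modv M2 s = w}"
  proof (intro equalityI subsetI)
    fix v assume v: "v \<in> {v \<in> {v \<in> vecs k M. \<forall>i<k. int p dvd v i}. modv M2 (\<lambda>i. v i div int p) = w}"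
    let ?s = "\<lambda>i. v i div int p"
    have s: "?s \<in> vecs k M1"
    proof -
      have "0 \<le> v i div int p \<and> v i div int p < int M1" if "i < k" for i
      proof -
        have "0 \<le> v i" "v i < int p * int M1" using v that M by (auto simp: vecs_def)
        then show ?thesis using pp int_div_lt[of "v i" "int p" "int M1"] by (simp add: pos_imp_zdiv_nonneg_iff)
      qed
      moreover have "v i div int p = 0" if "k \<le> i" for i using v that by (simp add: vecs_def)
      ultimately show ?thesis by (auto simp: vecs_def)
    qed
    have vk: "v \<in> vecs k M" "\<forall>i<k. int p dvd v i" using v by auto
    have vi: "v i = int p * (v i div int p)" for i
    proof (cases "i < k")
      case True then show ?thesis using vk(2) by simp
    next
      case False then have "v i = 0" using vk(1) by (simp add: vecs_def)
      then show ?thesis by simp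
    qed
    have vs: "v = (\<lambda>s i. int p * s i) ?s"
      by (rule ext, rule vi)
    have "modv M2 ?s = w" using v by simp
    then have "?s \<in> {s \<in> vecs k M1. modv M2 s = w}" using s by simp
    then show "v \<in> (\<lambda>s i. int p * s i) ` {s \<in> vecs k M1. modv M2 s = w}"
      by (rule image_eqI[where f="\<lambda>s i. int p * s i" and x="\<lambda>i. v i div int p", OF vs])
  next
    fix v assume "v \<in> (\<lambda>s i. int p * s i) ` {s \<in> vecs k M1. modv M2 s = w}"
    then obtain s where s: "v = (\<lambda>i. int p * s i)" "s \<in> vecs k M1" "modv M2 s = w" by auto
    have "v \<in> vecs k M"
    proof -
      have "0 \<le> v i \<and> v i < int M" if "i < k" for i
      proof -
        have "0 \<le> s i" "s i < int M1" using s that by (auto simp: vecs_def)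
        then show ?thesis using s(1) M pp by (simp add: mult_strict_left_mono)
      qed
      then show ?thesis using s by (auto simp: vecs_def)
    qed
    moreover have "(\<lambda>i. v i div int p) = s" using s pp by auto
    ultimately show "v \<in> {v \<in> {v \<in> vecs k M. \<forall>i<k. int p dvd v i}. modv M2 (\<lambda>i. v i div int p) = w}"
      using s by auto
  qed
  have inj: "inj_on (\<lambda>s i. int p * s i) {s \<in> vecs k M1. modv M2 s = w}"
    using pp by (auto simp: inj_on_def fun_eq_iff)
  have "card {s \<in> vecs k M1. modv M2 s = w} = (M1 div M2)^k"
    by (rule vecs_fiber[OF M20 _ w]) (simp add: M1)
  then show ?thesis unfolding eq card_image[OF inj] using M1 M20 by simp
qed

lemma afiber4:
  assumes pp: "0 < p" and M: "M = p^2 * M2" and t: "0 \<le> t" "t < int M2"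
  shows "card {a \<in> {a \<in> {0..<int M}. int p^2 dvd a}. (a div int p^2) mod int M2 = t} = 1"
proof -
  have p2: "0 < int p^2" using pp by simp
  have "{a \<in> {a \<in> {0..<int M}. int p^2 dvd a}. (a div int p^2) mod int M2 = t} = {int p^2 * t}"
  proof (intro equalityI subsetI)
    fix a assume a: "a \<in> {a \<in> {a \<in> {0..<int M}. int p^2 dvd a}. (a div int p^2) mod int M2 = t}"
    then have a1: "0 \<le> a" "a < int p^2 * int M2" "int p^2 dvd a" "(a div int p^2) mod int M2 = t"
      using M by auto
    have "0 \<le> a div int p^2" using a1 p2 by (simp add: pos_imp_zdiv_nonneg_iff)
    moreover have "a div int p^2 < int M2" using a1 p2 int_div_lt[of a "int p^2" "int M2"] by simp
    ultimately have "(a div int p^2) mod int M2 = a div int p^2" by simp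
    then have "a = int p^2 * t" using a1 by (metis dvd_mult_div_cancel)
    then show "a \<in> {int p^2 * t}" by simp
  next
    fix a assume "a \<in> {int p^2 * t}"
    then have a: "a = int p^2 * t" by simp
    have "a < int p^2 * int M2" using a t p2 by simp
    then show "a \<in> {a \<in> {a \<in> {0..<int M}. int p^2 dvd a}. (a div int p^2) mod int M2 = t}"
      using a t p2 M by simp
  qed
  then show ?thesis by simp
qed

lemma case4:
  assumes p: "prime p" "M = p^m" "3 \<le> m"
  shows "card {x \<in> sym0 k M \<times> ({v \<in> vecs k M. \<forall>i<k. int p dvd v i} \<times> {a \<in> {0..<int M}. int p^2 dvd a}).
             good (Suc k) M (ext k (fst x) (fst (snd x)) (snd (snd x)))}
       = ((p^2)^(tri k) * p^k) * Ncnt (Suc k) (p^(m-2))"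
proof -
  define M2 where "M2 = p^(m-2)"
  define M1 where "M1 = p^(m-1)"
  have pp: "0 < p" using p(1) by (simp add: prime_gt_0_nat)
  have M20: "0 < M2" using pp by (simp add: M2_def)
  define m' where "m' = m - 2"
  have m': "m = Suc (Suc m')" using p(3) unfolding m'_def by arith
  have MM1: "M = p * M1" using p(2) m' by (simp add: M1_def)
  have M1M2: "M1 = p * M2" using m' by (simp add: M1_def M2_def)
  have MM2: "M = p^2 * M2" using MM1 M1M2 by (simp add: power2_eq_square)
  have M2M: "M2 dvd M" using MM2 by simp
  let ?V4 = "{v \<in> vecs k M. \<forall>i<k. int p dvd v i}"
  let ?A4 = "{a \<in> {0..<int M}. int p^2 dvd a}"
  let ?X = "sym0 k M \<times> (?V4 \<times> ?A4)"
  let ?Y = "sym0 k M2 \<times> (vecs k M2 \<times> {0..<int M2})"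
  let ?f = "\<lambda>x. (modm M2 (fst x), modv M2 (\<lambda>i. fst (snd x) i div int p), (snd (snd x) div int p^2) mod int M2)"
  let ?G = "\<lambda>y. good (Suc k) M2 (ext k (fst y) (fst (snd y)) (snd (snd y)))"
  have key: "good (Suc k) M (ext k (fst x) (fst (snd x)) (snd (snd x))) \<longleftrightarrow> ?G (?f x)" if x: "x \<in> ?X" for x
  proof -
    obtain C v a where xe: "x = (C, v, a)" by (cases x) auto
    have v: "\<forall>i<k. int p dvd v i" and a: "int p^2 dvd a" using x xe by auto
    let ?B = "ext k C (\<lambda>i. v i div int p) (a div int p^2)"
    have d: "det (to_mat (Suc k) (ext k C v a)) = int p * int p * det (to_mat (Suc k) ?B)"
      by (rule case4_det[OF v a])
    have c: "[det (to_mat (Suc k) ?B) = det (to_mat (Suc k) (modm M2 ?B))] (mod int M2)"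
      by (rule det_cong[OF to_mat_carrier to_mat_carrier]) (simp add: to_mat_def modm_def cong_def)
    have "int M = int p * int p * int M2" using MM2 by (simp add: power2_eq_square)
    then have "good (Suc k) M (ext k C v a) \<longleftrightarrow> \<not> int M2 dvd det (to_mat (Suc k) ?B)"
      unfolding good_def d using pp by (simp add: mult.assoc)
    also have "\<dots> \<longleftrightarrow> good (Suc k) M2 (modm M2 ?B)" unfolding good_def using cong_dvd_iff[OF c] by simp
    also have "modm M2 ?B = ext k (modm M2 C) (modv M2 (\<lambda>i. v i div int p)) ((a div int p^2) mod int M2)"
      by (rule modm_ext)
    finally show ?thesis by (simp add: xe)
  qed
  have fib: "card {x\<in>?X. ?f x = y} = (p^2)^(tri k) * p^k" if y: "y \<in> ?Y" for y
  proof -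
    obtain D w t where ye: "y = (D, w, t)" by (cases y) auto
    have D: "D \<in> sym0 k M2" and w: "w \<in> vecs k M2" and t: "0 \<le> t" "t < int M2" using y ye by auto
    have "{x\<in>?X. ?f x = y} = {C \<in> sym0 k M. modm M2 C = D} \<times>
        ({v \<in> ?V4. modv M2 (\<lambda>i. v i div int p) = w} \<times> {a \<in> ?A4. (a div int p^2) mod int M2 = t})"
      using ye by auto
    then have "card {x\<in>?X. ?f x = y} = card {C \<in> sym0 k M. modm M2 C = D} *
        (card {v \<in> ?V4. modv M2 (\<lambda>i. v i div int p) = w} * card {a \<in> ?A4. (a div int p^2) mod int M2 = t})"
      by (simp add: card_cartesian_product)
    also have "\<dots> = (M div M2)^(tri k) * (p^k * 1)"
      by (simp only: sym0_fiber[OF M20 M2M D] vfiber4[OF pp MM1 M1M2 M20 w] afiber4[OF pp MM2 t])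
    also have "M div M2 = p^2" using MM2 M20 by simp
    finally show ?thesis by simp
  qed
  have fX: "?f ` ?X \<subseteq> ?Y"
  proof
    fix y assume "y \<in> ?f ` ?X"
    then obtain C v a where y: "y = ?f (C, v, a)" "C \<in> sym0 k M" "v \<in> ?V4" "a \<in> ?A4" by auto
    have "modm M2 C \<in> sym0 k M2" by (rule modm_sym0[OF y(2) M20])
    moreover have "modv M2 (\<lambda>i. v i div int p) \<in> vecs k M2"
      using y(3) M20 by (auto simp: vecs_def modv_def)
    moreover have "(a div int p^2) mod int M2 \<in> {0..<int M2}" using M20 by simp
    ultimately show "y \<in> ?Y" using y(1) by simp
  qed
  have fV: "finite ?V4" by (rule finite_subset[OF _ finite_vecs]) auto
  have fA: "finite ?A4" by (rule finite_subset[of _ "{0..<int M}"]) auto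
  have fX': "finite ?X" using fV fA finite_sym0 by (intro finite_cartesian_product)
  have fY: "finite ?Y" using finite_sym0 finite_vecs by auto
  have "card {x\<in>?X. good (Suc k) M (ext k (fst x) (fst (snd x)) (snd (snd x)))} = card {x \<in> ?X. ?G (?f x)}"
    by (rule arg_cong[where f=card]) (use key in auto)
  also have "\<dots> = ((p^2)^(tri k) * p^k) * card {y\<in>?Y. ?G y}"
    by (rule card_fiber_const[OF fX' fY fX fib])
  also have "card {y\<in>?Y. ?G y} = Ncnt (Suc k) M2"
    unfolding Ncnt_def using card_sym0_Suc_pred[of k M2 "good (Suc k) M2"] by simp
  finally show ?thesis by (simp add: M2_def)
qed

lemma card_split:
  assumes "finite X"
  shows "card {x\<in>X. G x} = card {x\<in>X. P x \<and> G x} + card {x\<in>X. \<not> P x \<and> G x}"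
proof -
  have "{x\<in>X. G x} = {x\<in>X. P x \<and> G x} \<union> {x\<in>X. \<not> P x \<and> G x}" by auto
  moreover have "card ({x\<in>X. P x \<and> G x} \<union> {x\<in>X. \<not> P x \<and> G x}) =
      card {x\<in>X. P x \<and> G x} + card {x\<in>X. \<not> P x \<and> G x}"
    by (rule card_Un_disjoint) (use assms in auto)
  ultimately show ?thesis by simp
qed

lemma card_not:
  assumes "finite S"
  shows "card {x\<in>S. \<not> P x} = card S - card {x\<in>S. P x}"
proof -
  have "{x\<in>S. \<not> P x} = S - {x\<in>S. P x}" by auto
  then show ?thesis using assms by (simp add: card_Diff_subset)
qed

lemma card_prod_filter:
  "card {y \<in> A \<times> B. P (fst y) \<and> Q (snd y)} = card {a\<in>A. P a} * card {b\<in>B. Q b}"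
proof -
  have "{y \<in> A \<times> B. P (fst y) \<and> Q (snd y)} = {a\<in>A. P a} \<times> {b\<in>B. Q b}" by auto
  then show ?thesis by (simp add: card_cartesian_product)
qed

lemma cnt_pdvd:
  assumes "0 < p" "p dvd M"
  shows "card {a \<in> {0..<int M}. int p dvd a} = M div p"
proof -
  have "{a \<in> {0..<int M}. int p dvd a} = {a \<in> {0..<int M}. a mod int p = 0}"
    by (auto simp: dvd_eq_mod_eq_0)
  then show ?thesis using card_mod_fiber[OF assms, of 0] assms by simp
qed

lemma cnt_p2dvd:
  assumes "0 < p" "p^2 dvd M"
  shows "card {a \<in> {0..<int M}. int p^2 dvd a} = M div p^2"
  using cnt_pdvd[of "p^2" M] assms by simp

lemma cnt_vecs_pdvd:
  assumes "0 < p" "p dvd M"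
  shows "card {v \<in> vecs k M. \<forall>i<k. int p dvd v i} = (M div p)^k"
proof -
  have "{v \<in> vecs k M. \<forall>i<k. int p dvd v i} = {v \<in> vecs k M. modv p v = (\<lambda>_. 0)}"
    by (auto simp: vecs_def modv_def fun_eq_iff dvd_eq_mod_eq_0) (metis mod_0 not_le)
  moreover have "card {v \<in> vecs k M. modv p v = (\<lambda>_. 0)} = (M div p)^k"
    by (rule vecs_fiber[OF assms]) (auto simp: vecs_def assms)
  ultimately show ?thesis by simp
qed

lemma count_rec:
  assumes p: "prime p" "M = p^m" "1 \<le> m"
  shows "Ncnt (Suc k) M = Ncnt k M * (M^k * (M - M div p))
    + (if k = 0 then 0 else Ncnt (k-1) M * (M^(k-1) * M) * ((M^k - (M div p)^k) * (M div p)))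
    + (if 2 \<le> m then p^(tri k) * Ncnt k (p^(m-1)) * ((M div p)^k * (M div p - M div p^2)) else 0)
    + (if 3 \<le> m then ((p^2)^(tri k) * p^k) * Ncnt (Suc k) (p^(m-2)) else 0)"
proof -
  have pp: "0 < p" using p(1) by (simp add: prime_gt_0_nat)
  have pM: "p dvd M" using p by (simp add: dvd_power)
  let ?Y0 = "vecs k M \<times> {0..<int M}"
  let ?X = "sym0 k M \<times> ?Y0"
  let ?G = "\<lambda>x. good (Suc k) M (ext k (fst x) (fst (snd x)) (snd (snd x)))"
  let ?Q = "\<lambda>C y. good (Suc k) M (ext k C (fst y) (snd y))"
  let ?P1 = "\<lambda>y. \<not> int p dvd snd y"
  let ?P2 = "\<lambda>y. \<exists>i<k. \<not> int p dvd fst y i"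
  let ?P3 = "\<lambda>y. \<not> int p^2 dvd snd y"
  have fX: "finite ?X" using finite_sym0 finite_vecs by auto
  have fY: "finite ?Y0" using finite_vecs by auto
  have N: "Ncnt (Suc k) M = card {x\<in>?X. ?G x}"
    unfolding Ncnt_def by (rule card_sym0_Suc_pred)
  have sp: "card {x\<in>?X. ?G x} = card {x\<in>?X. ?P1 (snd x) \<and> ?G x}
     + card {x\<in>?X. (\<not> ?P1 (snd x) \<and> ?P2 (snd x)) \<and> ?G x}
     + card {x\<in>?X. (\<not> ?P1 (snd x) \<and> \<not> ?P2 (snd x) \<and> ?P3 (snd x)) \<and> ?G x}
     + card {x\<in>?X. (\<not> ?P1 (snd x) \<and> \<not> ?P2 (snd x) \<and> \<not> ?P3 (snd x)) \<and> ?G x}"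
  proof -
    have a: "card {x\<in>?X. ?G x} = card {x\<in>?X. ?P1 (snd x) \<and> ?G x} + card {x\<in>?X. \<not> ?P1 (snd x) \<and> ?G x}"
      by (rule card_split[OF fX])
    have b: "card {x\<in>?X. \<not> ?P1 (snd x) \<and> ?G x} = card {x\<in>?X. ?P2 (snd x) \<and> (\<not> ?P1 (snd x) \<and> ?G x)}
       + card {x\<in>?X. \<not> ?P2 (snd x) \<and> (\<not> ?P1 (snd x) \<and> ?G x)}"
      by (rule card_split[OF fX])
    have c: "card {x\<in>?X. \<not> ?P2 (snd x) \<and> (\<not> ?P1 (snd x) \<and> ?G x)} =
        card {x\<in>?X. ?P3 (snd x) \<and> (\<not> ?P2 (snd x) \<and> (\<not> ?P1 (snd x) \<and> ?G x))}
       + card {x\<in>?X. \<not> ?P3 (snd x) \<and> (\<not> ?P2 (snd x) \<and> (\<not> ?P1 (snd x) \<and> ?G x))}"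
      by (rule card_split[OF fX])
    have e1: "{x\<in>?X. ?P2 (snd x) \<and> (\<not> ?P1 (snd x) \<and> ?G x)} = {x\<in>?X. (\<not> ?P1 (snd x) \<and> ?P2 (snd x)) \<and> ?G x}"
      by blast
    have e2: "{x\<in>?X. ?P3 (snd x) \<and> (\<not> ?P2 (snd x) \<and> (\<not> ?P1 (snd x) \<and> ?G x))} =
        {x\<in>?X. (\<not> ?P1 (snd x) \<and> \<not> ?P2 (snd x) \<and> ?P3 (snd x)) \<and> ?G x}" by blast
    have e3: "{x\<in>?X. \<not> ?P3 (snd x) \<and> (\<not> ?P2 (snd x) \<and> (\<not> ?P1 (snd x) \<and> ?G x))} =
        {x\<in>?X. (\<not> ?P1 (snd x) \<and> \<not> ?P2 (snd x) \<and> \<not> ?P3 (snd x)) \<and> ?G x}" by blast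
    show ?thesis using a b c e1 e2 e3 by simp
  qed
  have c1: "card {x\<in>?X. ?P1 (snd x) \<and> ?G x} = Ncnt k M * (M^k * (M - M div p))"
  proof -
    have "card {x\<in>?X. ?P1 (snd x) \<and> ?Q (fst x) (snd x)} = Ncnt k M * card {y\<in>?Y0. ?P1 y}"
      by (rule card_split_const[OF finite_sym0 fY]) (auto intro: inner1[OF p(1,2)])
    moreover have "card {y\<in>?Y0. ?P1 y} = M^k * (M - M div p)"
    proof -
      have "card {y\<in>?Y0. ?P1 y} = card {y\<in>?Y0. True \<and> ?P1 y}" by simp
      also have "\<dots> = card {v\<in>vecs k M. True} * card {a\<in>{0..<int M}. \<not> int p dvd a}"
        by (rule card_prod_filter)
      also have "\<dots> = M^k * (M - M div p)"
        using card_not[of "{0..<int M}" "\<lambda>a. int p dvd a"] cnt_pdvd[OF pp pM] by (simp add: card_vecs)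
      finally show ?thesis .
    qed
    ultimately show ?thesis by simp
  qed
  have c2: "card {x\<in>?X. (\<not> ?P1 (snd x) \<and> ?P2 (snd x)) \<and> ?G x} =
     (if k = 0 then 0 else Ncnt (k-1) M * (M^(k-1) * M) * ((M^k - (M div p)^k) * (M div p)))"
  proof (cases k)
    case 0
    then show ?thesis by simp
  next
    case (Suc k')
    have "card {x\<in>?X. (\<not> ?P1 (snd x) \<and> ?P2 (snd x)) \<and> ?Q (fst x) (snd x)}
       = (Ncnt k' M * (M^k' * M)) * card {y\<in>?Y0. \<not> ?P1 y \<and> ?P2 y}"
    proof (rule card_split_const[OF finite_sym0 fY])
      fix y assume "y \<in> ?Y0" "\<not> ?P1 y \<and> ?P2 y"
      then obtain j where j: "j < Suc k'" "\<not> int p dvd fst y j" "int p dvd snd y" using Suc by auto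
      show "card {C \<in> sym0 k M. ?Q C y} = Ncnt k' M * (M^k' * M)"
        unfolding Suc by (rule inner2[where v="fst y" and j=j, OF p(1,2) j(3) j(1,2)])
    qed
    moreover have "card {y\<in>?Y0. \<not> ?P1 y \<and> ?P2 y} = (M^k - (M div p)^k) * (M div p)"
    proof -
      have "card {y\<in>?Y0. \<not> ?P1 y \<and> ?P2 y} = card {y\<in>?Y0. ?P2 y \<and> int p dvd snd y}"
        by (rule arg_cong[where f=card]) auto
      also have "\<dots> = card {v\<in>vecs k M. \<exists>i<k. \<not> int p dvd v i} * card {a\<in>{0..<int M}. int p dvd a}"
        by (rule card_prod_filter)
      also have "card {v\<in>vecs k M. \<exists>i<k. \<not> int p dvd v i} = M^k - (M div p)^k"
      proof -
        have "card {v\<in>vecs k M. \<exists>i<k. \<not> int p dvd v i} = card {v\<in>vecs k M. \<not> (\<forall>i<k. int p dvd v i)}"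
          by simp
        also have "\<dots> = card (vecs k M) - card {v\<in>vecs k M. \<forall>i<k. int p dvd v i}"
          by (rule card_not[OF finite_vecs])
        finally show ?thesis by (simp add: card_vecs cnt_vecs_pdvd[OF pp pM])
      qed
      finally show ?thesis using cnt_pdvd[OF pp pM] by simp
    qed
    ultimately show ?thesis using Suc by simp
  qed
  have c3: "card {x\<in>?X. (\<not> ?P1 (snd x) \<and> \<not> ?P2 (snd x) \<and> ?P3 (snd x)) \<and> ?G x} =
     (if 2 \<le> m then p^(tri k) * Ncnt k (p^(m-1)) * ((M div p)^k * (M div p - M div p^2)) else 0)"
  proof (cases "2 \<le> m")
    case True
    have pM2: "p^2 dvd M" using p True by (simp add: le_imp_power_dvd)
    have "card {x\<in>?X. (\<not> ?P1 (snd x) \<and> \<not> ?P2 (snd x) \<and> ?P3 (snd x)) \<and> ?Q (fst x) (snd x)}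
       = (p^(tri k) * Ncnt k (p^(m-1))) * card {y\<in>?Y0. \<not> ?P1 y \<and> \<not> ?P2 y \<and> ?P3 y}"
    proof (rule card_split_const[OF finite_sym0 fY])
      fix y assume "y \<in> ?Y0" "\<not> ?P1 y \<and> \<not> ?P2 y \<and> ?P3 y"
      then have y: "\<forall>i<k. int p dvd fst y i" "int p dvd snd y" "\<not> int p^2 dvd snd y" by auto
      show "card {C \<in> sym0 k M. ?Q C y} = p^(tri k) * Ncnt k (p^(m-1))"
        by (rule inner3[OF p(1,2) True y])
    qed
    moreover have "card {y\<in>?Y0. \<not> ?P1 y \<and> \<not> ?P2 y \<and> ?P3 y} = (M div p)^k * (M div p - M div p^2)"
    proof -
      have "card {y\<in>?Y0. \<not> ?P1 y \<and> \<not> ?P2 y \<and> ?P3 y} =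
          card {y\<in>?Y0. (\<forall>i<k. int p dvd fst y i) \<and> (int p dvd snd y \<and> \<not> int p^2 dvd snd y)}"
        by (rule arg_cong[where f=card]) auto
      also have "\<dots> = card {v\<in>vecs k M. \<forall>i<k. int p dvd v i} *
          card {a\<in>{0..<int M}. int p dvd a \<and> \<not> int p^2 dvd a}"
        by (rule card_prod_filter)
      also have "card {a\<in>{0..<int M}. int p dvd a \<and> \<not> int p^2 dvd a} = M div p - M div p^2"
      proof -
        have "{a\<in>{0..<int M}. int p dvd a \<and> \<not> int p^2 dvd a} =
            {a\<in>{0..<int M}. int p dvd a} - {a\<in>{0..<int M}. int p^2 dvd a}" by auto
        moreover have sub: "{a\<in>{0..<int M}. int p^2 dvd a} \<subseteq> {a\<in>{0..<int M}. int p dvd a}"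
          by (auto simp: power2_eq_square intro: dvd_mult_left)
        moreover have fin: "finite {a\<in>{0..<int M}. int p^2 dvd a}"
          by (rule finite_subset[of _ "{0..<int M}"]) auto
        ultimately show ?thesis using cnt_pdvd[OF pp pM] cnt_p2dvd[OF pp pM2] card_Diff_subset[OF fin sub]
          by simp
      qed
      finally show ?thesis using cnt_vecs_pdvd[OF pp pM] by simp
    qed
    ultimately show ?thesis using True by simp
  next
    case False
    then have m1: "m = 1" using p(3) by simp
    have E: "{x\<in>?X. (\<not> ?P1 (snd x) \<and> \<not> ?P2 (snd x) \<and> ?P3 (snd x)) \<and> ?G x} = {}"
    proof (rule ccontr)
      assume "{x\<in>?X. (\<not> ?P1 (snd x) \<and> \<not> ?P2 (snd x) \<and> ?P3 (snd x)) \<and> ?G x} \<noteq> {}"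
      then obtain x where x: "x \<in> ?X" "int p dvd snd (snd x)" "\<not> int p^2 dvd snd (snd x)" by auto
      have "0 \<le> snd (snd x)" "snd (snd x) < int p" using x(1) p(2) m1 by auto
      then have "snd (snd x) = 0" using x(2) by (metis zdvd_imp_le dvd_imp_le_int le_less not_le zdvd_not_zless)
      then show False using x(3) by simp
    qed
    show ?thesis unfolding E using False by simp
  qed
  have c4: "card {x\<in>?X. (\<not> ?P1 (snd x) \<and> \<not> ?P2 (snd x) \<and> \<not> ?P3 (snd x)) \<and> ?G x} =
     (if 3 \<le> m then ((p^2)^(tri k) * p^k) * Ncnt (Suc k) (p^(m-2)) else 0)"
  proof -
    have e: "{x\<in>?X. (\<not> ?P1 (snd x) \<and> \<not> ?P2 (snd x) \<and> \<not> ?P3 (snd x)) \<and> ?G x} =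
      {x \<in> sym0 k M \<times> ({v \<in> vecs k M. \<forall>i<k. int p dvd v i} \<times> {a \<in> {0..<int M}. int p^2 dvd a}). ?G x}"
      by (auto simp: power2_eq_square intro: dvd_mult_left)
    show ?thesis
    proof (cases "3 \<le> m")
      case True
      then show ?thesis unfolding e using case4[OF p(1,2) True] by simp
    next
      case False
      have "\<not> ?G x" if x: "x \<in> sym0 k M \<times> ({v \<in> vecs k M. \<forall>i<k. int p dvd v i} \<times> {a \<in> {0..<int M}. int p^2 dvd a})" for x
      proof -
        obtain C v a where xe: "x = (C, v, a)" by (cases x) auto
        have v: "\<forall>i<k. int p dvd v i" and a: "int p^2 dvd a" using x xe by auto
        have "int M dvd int p * int p"
        proof -
          have "m \<le> 2" using False by simp
          then have "p^m dvd p^2" by (rule le_imp_power_dvd)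
          then have "M dvd p * p" using p(2) by (simp add: power2_eq_square)
          then show ?thesis by (metis int_dvd_int_iff of_nat_mult)
        qed
        then show ?thesis unfolding good_def xe fst_conv snd_conv case4_det[OF v a] by simp
      qed
      then have E: "{x \<in> sym0 k M \<times> ({v \<in> vecs k M. \<forall>i<k. int p dvd v i} \<times> {a \<in> {0..<int M}. int p^2 dvd a}). ?G x} = {}"
        by blast
      show ?thesis unfolding e E using False by simp
    qed
  qed
  show ?thesis using N sp c1 c2 c3 c4 by simp
qed

lemma card_bij_pred2:
  assumes "bij_betw g S T"
  shows "card {x\<in>S. Q (g x)} = card {y\<in>T. Q y}"
proof -
  have "g ` {x\<in>S. Q (g x)} = {y\<in>T. Q y}" using assms by (auto simp: bij_betw_def)
  moreover have "inj_on g {x\<in>S. Q (g x)}" using assms by (auto simp: bij_betw_def intro: inj_on_subset)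
  ultimately show ?thesis by (metis card_image)
qed

lemma sym_mats_bij:
  assumes M0: "0 < M"
  shows "bij_betw (modm M) (sym_mats n M) (sym0 n M)"
proof (rule bij_betw_byWitness[where f'="\<lambda>B i j. if i<n \<and> j<n then (if B i j = 0 then int M else B i j) else 0"])
  show "\<forall>a\<in>sym_mats n M. (\<lambda>i j. if i<n \<and> j<n then (if modm M a i j = 0 then int M else modm M a i j) else 0) = a"
  proof (intro ballI ext)
    fix A i j assume A: "A \<in> sym_mats n M"
    show "(if i<n \<and> j<n then (if modm M A i j = 0 then int M else modm M A i j) else 0) = A i j"
    proof (cases "i<n \<and> j<n")
      case True
      then have r: "1 \<le> A i j" "A i j \<le> int M" using A by (auto simp: sym_mats_def)
      show ?thesis
      proof (cases "A i j = int M")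
        case True then show ?thesis using \<open>i<n \<and> j<n\<close> by (simp add: modm_def)
      next
        case False
        then have "A i j mod int M = A i j" using r by simp
        then show ?thesis using \<open>i<n \<and> j<n\<close> r by (simp add: modm_def)
      qed
    next
      case False
      then have "A i j = 0" using A unfolding sym_mats_def by blast
      then show ?thesis unfolding if_not_P[OF False] by simp
    qed
  qed
  show "\<forall>b\<in>sym0 n M. modm M (\<lambda>i j. if i<n \<and> j<n then (if b i j = 0 then int M else b i j) else 0) = b"
  proof (intro ballI ext)
    fix B i j assume B: "B \<in> sym0 n M"
    show "modm M (\<lambda>i j. if i<n \<and> j<n then (if B i j = 0 then int M else B i j) else 0) i j = B i j"
    proof (cases "i<n \<and> j<n")
      case True
      then have r: "0 \<le> B i j" "B i j < int M" using B by (auto simp: sym0_def)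
      then show ?thesis using True by (simp add: modm_def)
    next
      case False then show ?thesis using B by (simp add: sym0_def modm_def)
    qed
  qed
  show "modm M ` sym_mats n M \<subseteq> sym0 n M"
    using M0 by (auto simp: sym_mats_def sym0_def modm_def)
  show "(\<lambda>B i j. if i<n \<and> j<n then (if B i j = 0 then int M else B i j) else 0) ` sym0 n M \<subseteq> sym_mats n M"
  proof
    fix A assume "A \<in> (\<lambda>B i j. if i<n \<and> j<n then (if B i j = 0 then int M else B i j) else 0) ` sym0 n M"
    then obtain B where B: "B \<in> sym0 n M" "A = (\<lambda>i j. if i<n \<and> j<n then (if B i j = 0 then int M else B i j) else 0)"
      by auto
    show "A \<in> sym_mats n M" unfolding sym_mats_def
    proof (intro CollectI conjI allI impI)
      fix i j assume ij: "i < n \<and> j < n"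
      have r: "0 \<le> B i j" "B i j < int M" "B i j = B j i" using B(1) ij by (auto simp: sym0_def)
      show "A i j \<in> {1..int M}" using r ij B(2) M0 by auto
      show "A i j = A j i" using r ij B(2) by auto
    next
      fix i j assume "\<not> (i < n \<and> j < n)" then show "A i j = 0" using B(2) by auto
    qed
  qed
qed

lemma P_link:
  assumes M0: "0 < M"
  shows "P_nonsing n M = real (Ncnt n M) / real (M ^ tri n)"
proof -
  have c1: "card (sym_mats n M) = M ^ tri n"
    using bij_betw_same_card[OF sym_mats_bij[OF M0]] card_sym0 by simp
  have "card {A \<in> sym_mats n M. \<not> int M dvd det (to_mat n A)} = card {A \<in> sym_mats n M. good n M (modm M A)}"
  proof (rule arg_cong[where f=card], rule Collect_cong)
    fix A
    have "[det (to_mat n A) = det (to_mat n (modm M A))] (mod int M)"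
      by (rule det_cong[OF to_mat_carrier to_mat_carrier]) (simp add: to_mat_def modm_def cong_def)
    then show "(A \<in> sym_mats n M \<and> \<not> int M dvd det (to_mat n A)) = (A \<in> sym_mats n M \<and> good n M (modm M A))"
      unfolding good_def using cong_dvd_iff by blast
  qed
  also have "\<dots> = Ncnt n M" unfolding Ncnt_def by (rule card_bij_pred2[OF sym_mats_bij[OF M0]])
  finally show ?thesis by (simp add: P_nonsing_def c1)
qed

definition R :: "nat \<Rightarrow> nat \<Rightarrow> nat \<Rightarrow> real" where
  "R p n m = (if m = 0 then 0 else real (Ncnt n (p^m)) / real ((p^m) ^ tri n))"

lemma Ncnt0: "1 < M \<Longrightarrow> Ncnt 0 M = 1"
  unfolding Ncnt_def good_def sym0_0 by (simp add: to_mat_def)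

lemma Pb_R:
  assumes "prime p"
  shows "Pb p n \<mu> = R p n (nat \<mu>)"
proof (cases "\<mu> \<le> 0")
  case True then show ?thesis by (simp add: Pb_def R_def)
next
  case False
  have p1: "1 < p" using prime_gt_1_nat[OF assms] by simp
  have m: "nat \<mu> \<noteq> 0" using False by simp
  have M1: "1 < p ^ nat \<mu>" using one_less_power[OF p1, of "nat \<mu>"] m by simp
  show ?thesis
  proof (cases "n = 0")
    case True then show ?thesis using False m Ncnt0[OF M1] by (simp add: Pb_def R_def)
  next
    case n: False
    have "0 < p ^ nat \<mu>" using M1 by linarith
    then show ?thesis using False m n P_link by (simp add: Pb_def R_def)
  qed
qed

lemma alg1: "0 < (X::real) \<Longrightarrow> 0 < P \<Longrightarrow> a * (X^k * (X - X/P)) / (X^T * X^k * X) = (1 - 1/P) * (a / X^T)"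
  by (simp add: field_simps)
lemma alg2: "0 < (X::real) \<Longrightarrow> 0 < P \<Longrightarrow> b * (X^k' * X) * ((X^(Suc k') - (X/P)^(Suc k')) * (X/P)) / (X^(T' + Suc k') * X^(Suc k') * X) = (1/P) * (1 - (1/P)^(Suc k')) * (b / X^T')"
  by (simp add: field_simps power_add power_divide power2_eq_square)
lemma alg3: "0 < (X::real) \<Longrightarrow> 0 < P \<Longrightarrow> P^T * c * ((X/P)^k * (X/P - X/P^2)) / (X^T * X^k * X) = (1/P)^(Suc k) * (1 - 1/P) * (c / (X/P)^T)"
  by (simp add: field_simps power_add power_divide power2_eq_square)
lemma alg4: "0 < (X::real) \<Longrightarrow> 0 < P \<Longrightarrow> (P^2)^T * P^k * d / (X^T * X^k * X) = (1/P)^(Suc k + 1) * (d / (X/P^2)^(T + Suc k))"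
  by (simp add: field_simps power_add power_divide power_mult_distrib power2_eq_square mult_2_right flip: power_mult)

lemma real_rec:
  assumes p: "prime p" and m: "1 \<le> m"
  shows "R p (Suc k) m = (1 - 1/real p) * R p k m
     + (if 1 \<le> k then (1/real p) * (1 - (1/real p)^k) * R p (k-1) m else 0)
     + (1/real p)^(Suc k) * (1 - 1/real p) * R p k (m-1)
     + (1/real p)^(Suc k + 1) * R p (Suc k) (m-2)"
proof -
  define M where "M = p^m"
  define X where "X = real M"
  define P where "P = real p"
  have pp: "0 < p" using p by (simp add: prime_gt_0_nat)
  have P0: "0 < P" using pp by (simp add: P_def)
  have M0: "0 < M" using pp by (simp add: M_def)
  have X0: "0 < X" using M0 by (simp add: X_def)
  have pM: "p dvd M" using m by (simp add: M_def dvd_power)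
  have hMp: "real (M div p) = X / P" using pM by (simp add: X_def P_def real_of_nat_div)
  have hM1: "real (p^(m-1)) = X / P"
  proof -
    have "p^(m-1) = M div p" using m pp by (simp add: M_def power_eq_if[of p m])
    then show ?thesis using hMp by simp
  qed
  define N1 where "N1 = Ncnt k M * (M^k * (M - M div p))"
  define N2 where "N2 = (if k = 0 then 0 else Ncnt (k-1) M * (M^(k-1) * M) * ((M^k - (M div p)^k) * (M div p)))"
  define N3 where "N3 = (if 2 \<le> m then p^(tri k) * Ncnt k (p^(m-1)) * ((M div p)^k * (M div p - M div p^2)) else 0)"
  define N4 where "N4 = (if 3 \<le> m then ((p^2)^(tri k) * p^k) * Ncnt (Suc k) (p^(m-2)) else 0)"
  have rec: "Ncnt (Suc k) M = N1 + N2 + N3 + N4"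
    unfolding N1_def N2_def N3_def N4_def using count_rec[OF p M_def m] by simp
  define D where "D = X^(tri k) * X^k * X"
  have D: "real (M ^ tri (Suc k)) = D" by (simp add: D_def X_def power_add)
  have "R p (Suc k) m = real (Ncnt (Suc k) M) / real (M ^ tri (Suc k))" using m by (simp add: R_def M_def)
  also have "\<dots> = (real N1 + real N2 + real N3 + real N4) / D" by (simp only: rec D of_nat_add)
  also have "\<dots> = real N1 / D + real N2 / D + real N3 / D + real N4 / D" by (simp only: add_divide_distrib)
  finally have L: "R p (Suc k) m = real N1 / D + real N2 / D + real N3 / D + real N4 / D" .
  have t1: "real N1 / D = (1 - 1/P) * R p k m"
  proof -
    have "real (M - M div p) = X - X/P" using hMp by (simp add: X_def of_nat_diff div_le_dividend)
    then have "real N1 = real (Ncnt k M) * (X^k * (X - X/P))" by (simp add: N1_def X_def)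
    moreover have "R p k m = real (Ncnt k M) / X^(tri k)" using m by (simp add: R_def M_def X_def)
    ultimately show ?thesis unfolding D_def using alg1[OF X0 P0] by simp
  qed
  have t2: "real N2 / D = (if 1 \<le> k then (1/P) * (1 - (1/P)^k) * R p (k-1) m else 0)"
  proof (cases k)
    case 0 then show ?thesis by (simp add: N2_def)
  next
    case (Suc k')
    have le: "(M div p)^k \<le> M^k" by (simp add: power_mono div_le_dividend)
    have "real (M^k - (M div p)^k) = X^k - (X/P)^k" using hMp le by (simp add: X_def of_nat_diff)
    then have "real N2 = real (Ncnt k' M) * (X^k' * X) * ((X^(Suc k') - (X/P)^(Suc k')) * (X/P))"
      using Suc hMp by (simp add: N2_def X_def)
    moreover have "R p k' m = real (Ncnt k' M) / X^(tri k')" using m by (simp add: R_def M_def X_def)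
    moreover have "D = X^(tri k' + Suc k') * X^(Suc k') * X" using Suc by (simp add: D_def)
    ultimately show ?thesis using alg2[OF X0 P0] Suc by simp
  qed
  have t3: "real N3 / D = (1/P)^(Suc k) * (1 - 1/P) * R p k (m-1)"
  proof (cases "2 \<le> m")
    case True
    have pM2: "p^2 dvd M" using True by (simp add: M_def le_imp_power_dvd)
    have hMp2: "real (M div p^2) = X / P^2" using pM2 by (simp add: X_def P_def real_of_nat_div)
    have le: "M div p^2 \<le> M div p" using pp by (intro div_le_mono2) (auto simp: power2_eq_square)
    have "real (M div p - M div p^2) = X/P - X/P^2" using hMp hMp2 le by (simp add: of_nat_diff)
    then have "real N3 = P^(tri k) * real (Ncnt k (p^(m-1))) * ((X/P)^k * (X/P - X/P^2))"
      using True hMp by (simp add: N3_def P_def)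
    moreover have "R p k (m-1) = real (Ncnt k (p^(m-1))) / (X/P)^(tri k)"
      using True hM1 by (simp add: R_def)
    ultimately show ?thesis unfolding D_def using alg3[OF X0 P0] by simp
  next
    case False
    then have "m - 1 = 0" using m by simp
    then show ?thesis using False by (simp add: N3_def R_def)
  qed
  have t4: "real N4 / D = (1/P)^(Suc k + 1) * R p (Suc k) (m-2)"
  proof (cases "3 \<le> m")
    case True
    have hM2: "real (p^(m-2)) = X / P^2"
    proof -
      have "p^(m-2) * p^2 = p^(m - 2 + 2)" by (rule power_add[symmetric])
      also have "m - 2 + 2 = m" using True by simp
      finally have "p^(m-2) * p^2 = M" by (simp add: M_def)
      then have "real (p^(m-2)) * P^2 = X" by (simp add: X_def P_def flip: of_nat_mult of_nat_power)
      then show ?thesis using P0 by (simp add: field_simps)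
    qed
    have "real N4 = (P^2)^(tri k) * P^k * real (Ncnt (Suc k) (p^(m-2)))"
      using True by (simp add: N4_def P_def)
    moreover have "R p (Suc k) (m-2) = real (Ncnt (Suc k) (p^(m-2))) / (X/P^2)^(tri k + Suc k)"
      using True hM2 by (simp add: R_def)
    ultimately show ?thesis unfolding D_def using alg4[OF X0 P0] by simp
  next
    case False
    then have "m - 2 = 0" by simp
    then show ?thesis using False by (simp add: N4_def R_def)
  qed
  show ?thesis using L t1 t2 t3 t4 by (simp add: P_def)
qed

theorem theorem3p1:
  fixes p n :: nat and \<mu> :: int and q :: real
  assumes "prime p" and "q = 1 / real p" and "n > 0" and "\<mu> > 0"
  shows "Pb p n \<mu> =
           (1 - q) * Pb p (n - 1) \<mu>
         + (if n \<ge> 2 then q * (1 - q ^ (n - 1)) * Pb p (n - 2) \<mu> else 0)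
         + q ^ n * (1 - q) * Pb p (n - 1) (\<mu> - 1)
         + q ^ (n + 1) * Pb p n (\<mu> - 2)"
proof -
  obtain k where n: "n = Suc k" using assms(3) by (cases n) auto
  define m where "m = nat \<mu>"
  have m1: "1 \<le> m" using assms(4) by (simp add: m_def)
  have e1: "nat (\<mu> - 1) = m - 1" using assms(4) by (simp add: m_def)
  have e2: "nat (\<mu> - 2) = m - 2" using assms(4) by (simp add: m_def)
  have c: "(2 \<le> n) = (1 \<le> k)" using n by simp
  show ?thesis
    unfolding Pb_R[OF assms(1)] e1 e2 m_def[symmetric] c assms(2)
    using real_rec[OF assms(1) m1, of k] n by simp
qed

end
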